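(* Let $r,s,n$ be positive integers with $s\mid r$, let $\omega\in G(r,s,n)$, and let $m_1,m_2\ge 0$ be integers. Then \[ \widetilde f_{m_1,m_2}^{\omega}=\left(r^{m_1-n+1}\,n^{m_2}\binom{m_1+m_2}{m_1} f_{m_2}^{\phi(\omega)}\right)\widetilde f_{m_1}^{\pi(\omega)}, \] where $\widetilde f_{m_1}^{\pi(\omega)}$ is the connected factorization number of $\pi(\omega)$ in $S_n=G(1,1,n)$, and \[ f_{m_2}^{\phi(\omega)}=\frac{1}{r/s}\Big((r/s-1)^{m_2}-(-1)^{m_2}\Big)+\delta(\omega)(-1)^{m_2}. \]
   Context: Let $r,s,n$ be positive integers with $s\mid r$ and $\zeta_r=e^{2\pi i/r}$. For $1\le i<j\le n$ and $0\le k<r$, let $\sigma_{ij}^{k/r}\in GL(\mathbb{C}^n)$ send $(a_1,\dots,a_n)$ to the vector whose $i$-th coordinate is $\zeta_r^{-k}a_j$, whose $j$-th coordinate is $\zeta_r^{k}a_i$, and whose other coordinates are unchanged. For $1\le i\le n$ and $0<k<r/s$, let $\tau_i^{sk/r}$ multiply the $i$-th coordinate by $\zeta_r^{sk}$ and fix the others. Let $R_1$ be the set of all $\sigma_{ij}^{k/r}$, $R_2$ the set of all $\tau_i^{sk/r}$ (empty if $r=s$), and $R=R_1\sqcup R_2$. The group $G(r,s,n)$ is the group generated by $R$; equivalently, it is the group of $n\times n$ complex matrices with exactly one nonzero entry in each row and column, each nonzero entry an $r$-th root of unity, and the product of the nonzero entries an $(r/s)$-th root of unity. In particular $G(1,1,n)=S_n$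 (permutation matrices), whose set $R$ is the set of transpositions, and $G(r,s,1)=\mu_{r/s}$ (the $(r/s)$-th roots of unity), whose set $R$ is the set of non-identity elements. Let $\pi:G(r,s,n)\to S_n$ replace each nonzero entry by $1$, $\phi:G(r,s,n)\to\mu_{r/s}$ be the product of the nonzero entries, and $\delta(\omega)=1$ if $\phi(\omega)=1$ and $\delta(\omega)=0$ otherwise. For $\omega\in G(r,s,n)$ and $m\ge0$, a factorization of $\omega$ of length $m$ is a tuple $(\rho_1,\dots,\rho_m)\in R^m$ with $\rho_m\cdots\rho_1=\omega$; $f_m^\omega$ is the number of them. Its associated graph has vertex set $\{1,\dots,n\}$ and, for each $t$, an edge $\{i,j\}$ if $\rho_t=\sigma_{ij}^{k/r}$ and a self-loop at $i$ if $\rho_t=\tau_i^{sk/r}$. A factorization is connected if this graph is connected. $\widetilde f_m^\omega$ is the number of connected factorizations of length $m$, and $\widetilde f_{m_1,m_2}^\omega$ is the number of connected factorizations of length $m_1+m_2$ in which exactly $m_1$ factors lie in $R_1$ and $m_2$ lie in $R_2$. For $\kappa\in\mu_{r/s}$, $f_{m}^{\kappa}$ is the number of $m$-tuples of non-identity elements of $\mu_{r/s}$ whose product is $\kappa$. *)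

theory Defs
  imports Complex_Main
begin

text \<open>Matrices over the complex numbers, indexed by 0..<n (coordinates 1..n of the
paper are shifted to 0..n-1); entries outside the index range are 0.\<close>

type_synonym cmat = "nat \<Rightarrow> nat \<Rightarrow> complex"

definition mat_mult :: "nat \<Rightarrow> cmat \<Rightarrow> cmat \<Rightarrow> cmat" where
  "mat_mult n A B = (\<lambda>i j. if i < n \<and> j < n then (\<Sum>k<n. A i k * B k j) else 0)"

definition mat_one :: "nat \<Rightarrow> cmat" where
  "mat_one n = (\<lambda>i j. if i < n \<and> j < n \<and> i = j then 1 else 0)"

definition zeta :: "nat \<Rightarrow> complex" where
  "zeta r = cis (2 * pi / real r)"

definition mu :: "nat \<Rightarrow> complex set" where
  "mu k = {z. z ^ k = 1}"

definition phi :: "nat \<Rightarrow> cmat \<Rightarrow> complex" where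
  "phi n A = (\<Prod>i<n. \<Prod>j<n. (if A i j = 0 then 1 else A i j))"

definition Grp :: "nat \<Rightarrow> nat \<Rightarrow> nat \<Rightarrow> cmat set" where
  "Grp r s n = {A. (\<forall>i j. (n \<le> i \<or> n \<le> j) \<longrightarrow> A i j = 0)
      \<and> (\<forall>i<n. \<exists>!j. j < n \<and> A i j \<noteq> 0)
      \<and> (\<forall>j<n. \<exists>!i. i < n \<and> A i j \<noteq> 0)
      \<and> (\<forall>i<n. \<forall>j<n. A i j \<noteq> 0 \<longrightarrow> A i j ^ r = 1)
      \<and> phi n A \<in> mu (r div s)}"

definition piS :: "cmat \<Rightarrow> cmat" where
  "piS A = (\<lambda>i j. if A i j \<noteq> 0 then 1 else 0)"

definition delta :: "nat \<Rightarrow> cmat \<Rightarrow> nat" where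
  "delta n A = (if phi n A = 1 then 1 else 0)"

text \<open>Labels of reflections: Sig i j k stands for sigma_{ij}^{k/r} and Tau i k for
tau_i^{sk/r}.  Distinct valid labels give distinct matrices, so tuples of labels
correspond bijectively to tuples of elements of R.\<close>
datatype refl = Sig nat nat nat | Tau nat nat

fun valid_refl :: "nat \<Rightarrow> nat \<Rightarrow> nat \<Rightarrow> refl \<Rightarrow> bool" where
  "valid_refl r s n (Sig i j k) = (i < j \<and> j < n \<and> k < r)"
| "valid_refl r s n (Tau i k) = (i < n \<and> 0 < k \<and> k < r div s)"

fun is_Sig :: "refl \<Rightarrow> bool" where
  "is_Sig (Sig i j k) = True"
| "is_Sig (Tau i k) = False"

fun refl_mat :: "nat \<Rightarrow> nat \<Rightarrow> nat \<Rightarrow> refl \<Rightarrow> cmat" where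
  "refl_mat r s n (Sig i j k) = (\<lambda>a b. if a < n \<and> b < n then
       (if a = i \<and> b = j then inverse (zeta r ^ k)
        else if a = j \<and> b = i then zeta r ^ k
        else if a = b \<and> a \<noteq> i \<and> a \<noteq> j then 1 else 0) else 0)"
| "refl_mat r s n (Tau i k) = (\<lambda>a b. if a < n \<and> b < n \<and> a = b then
       (if a = i then zeta r ^ (s * k) else 1) else 0)"

definition Refl :: "nat \<Rightarrow> nat \<Rightarrow> nat \<Rightarrow> refl set" where
  "Refl r s n = {x. valid_refl r s n x}"

text \<open>For the list [rho_1,...,rho_m], the product rho_m \<cdots> rho_1.\<close>
definition fact_prod :: "nat \<Rightarrow> nat \<Rightarrow> nat \<Rightarrow> refl list \<Rightarrow> cmat" where
  "fact_prod r s n xs = foldr (\<lambda>x acc. mat_mult n acc (refl_mat r s n x)) xs (mat_one n)"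

definition factorizations :: "nat \<Rightarrow> nat \<Rightarrow> nat \<Rightarrow> nat \<Rightarrow> cmat \<Rightarrow> refl list set" where
  "factorizations r s n m w = {xs. length xs = m \<and> set xs \<subseteq> Refl r s n \<and> fact_prod r s n xs = w}"

text \<open>Edges of the associated graph (self-loops are irrelevant for connectivity).\<close>
definition fact_edges :: "refl list \<Rightarrow> (nat \<times> nat) set" where
  "fact_edges xs = {(i, j) | i j k. Sig i j k \<in> set xs}"

definition connected_fact :: "nat \<Rightarrow> refl list \<Rightarrow> bool" where
  "connected_fact n xs = (\<forall>a<n. \<forall>b<n. (a, b) \<in> (fact_edges xs \<union> (fact_edges xs)\<inverse>)\<^sup>*)"

definition conn_num :: "nat \<Rightarrow> nat \<Rightarrow> nat \<Rightarrow> nat \<Rightarrow> cmat \<Rightarrow> nat" where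
  "conn_num r s n m w = card {xs \<in> factorizations r s n m w. connected_fact n xs}"

definition conn_num2 :: "nat \<Rightarrow> nat \<Rightarrow> nat \<Rightarrow> nat \<Rightarrow> nat \<Rightarrow> cmat \<Rightarrow> nat" where
  "conn_num2 r s n m1 m2 w = card {xs \<in> factorizations r s n (m1 + m2) w. connected_fact n xs
      \<and> length (filter is_Sig xs) = m1 \<and> length (filter (\<lambda>x. \<not> is_Sig x) xs) = m2}"

definition cyc_num :: "nat \<Rightarrow> nat \<Rightarrow> complex \<Rightarrow> nat" where
  "cyc_num q m \<kappa> = card {zs. length zs = m \<and> set zs \<subseteq> mu q - {1} \<and> prod_list zs = \<kappa>}"

end

theory Submission
  imports Defs
begin


lemma zeta_pow: "0 < r \<Longrightarrow> zeta r ^ k = cis (2 * pi * real k / real r)"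
  unfolding zeta_def by (simp add: DeMoivre mult_ac)

lemma zeta_bij: "0 < r \<Longrightarrow> bij_betw (\<lambda>k. zeta r ^ k) {..<r} (mu r)"
  using bij_betw_roots_unity[of r] by (simp add: zeta_pow mu_def)

lemma zeta_r: "0 < r \<Longrightarrow> zeta r ^ r = 1"
  by (simp add: zeta_pow complex_eq_iff)

lemma zeta_root: "0 < r \<Longrightarrow> (zeta r ^ k) ^ r = 1"
  by (metis power_mult mult.commute zeta_r power_one)

lemma zeta_ne [simp]: "zeta r \<noteq> 0"
  by (simp add: zeta_def)

lemma zeta_nz: "zeta r ^ k \<noteq> 0"
  by (simp add: zeta_def)

lemma zeta_ex1: assumes "0 < r" "u ^ r = 1" shows "\<exists>!k. k < r \<and> zeta r ^ k = u"
proof -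
  have b: "bij_betw (\<lambda>k. zeta r ^ k) {..<r} (mu r)" by (rule zeta_bij[OF assms(1)])
  have "u \<in> mu r" using assms by (simp add: mu_def)
  then obtain k where k: "k < r" "zeta r ^ k = u" using b unfolding bij_betw_def by (metis imageE lessThan_iff)
  moreover have "\<And>l. l < r \<Longrightarrow> zeta r ^ l = u \<Longrightarrow> l = k"
    using b k unfolding bij_betw_def inj_on_def by auto
  ultimately show ?thesis by blast
qed

lemma zeta_sub: assumes "0 < s" "s dvd r" "0 < r"
  shows "zeta r ^ (s * k) = zeta (r div s) ^ k"
proof -
  obtain q where q: "r = s * q" using assms(2) by auto
  have "q > 0" using q assms by auto
  have "r div s = q" using q assms by simp
  thus ?thesis using q assms \<open>q > 0\<close> by (simp add: zeta_pow field_simps)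
qed

lemma mu_card: "0 < q \<Longrightarrow> card (mu q) = q"
  by (simp add: mu_def card_roots_unity_eq)

lemma mu_finite: "0 < q \<Longrightarrow> finite (mu q)"
  unfolding mu_def by (rule finite_roots_unity) simp



definition M :: "nat \<Rightarrow> (nat \<Rightarrow> nat) \<Rightarrow> (nat \<Rightarrow> complex) \<Rightarrow> cmat" where
  "M n p d = (\<lambda>a b. if a < n \<and> b < n \<and> b = p a then d a else 0)"

lemma mult_M:
  assumes "\<forall>a<n. p a < n"
  shows "mat_mult n (M n p d) (M n q e) = M n (q \<circ> p) (\<lambda>a. d a * e (p a))"
proof (rule ext, rule ext)
  fix a b
  show "mat_mult n (M n p d) (M n q e) a b = M n (q \<circ> p) (\<lambda>a. d a * e (p a)) a b"
  proof (cases "a < n \<and> b < n")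
    case True
    have pa: "p a < n" using assms True by simp
    have "(\<Sum>k<n. M n p d a k * M n q e k b) = (\<Sum>k<n. if k = p a then d a * M n q e k b else 0)"
      using True by (intro sum.cong) (auto simp: M_def)
    also have "\<dots> = d a * M n q e (p a) b" using pa by (subst sum.delta) auto
    finally have "(\<Sum>k<n. M n p d a k * M n q e k b) = d a * M n q e (p a) b" .
    moreover have "mat_mult n (M n p d) (M n q e) a b = (\<Sum>k<n. M n p d a k * M n q e k b)"
      using True by (simp add: mat_mult_def)
    moreover have "d a * M n q e (p a) b = M n (q \<circ> p) (\<lambda>a. d a * e (p a)) a b"
      using True assms by (auto simp: M_def)
    ultimately show ?thesis by simp
  qed (auto simp: mat_mult_def M_def)
qed

lemma one_M: "mat_one n = M n id (\<lambda>_. 1)"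
  by (auto simp: mat_one_def M_def fun_eq_iff)

lemma M_eq:
  assumes "\<forall>a<n. p a < n" "\<forall>a<n. p' a < n" "\<forall>a<n. d a \<noteq> 0" "\<forall>a<n. d' a \<noteq> 0"
  shows "M n p d = M n p' d' \<longleftrightarrow> (\<forall>a<n. p a = p' a \<and> d a = d' a)"
proof
  assume h: "M n p d = M n p' d'"
  show "\<forall>a<n. p a = p' a \<and> d a = d' a"
  proof (intro allI impI)
    fix a assume a: "a < n"
    have e1: "M n p d a (p a) = M n p' d' a (p a)" using h by simp
    have "p a = p' a" using e1 a assms by (simp add: M_def split: if_splits)
    moreover have "d a = d' a" using e1 a assms calculation by (simp add: M_def)
    ultimately show "p a = p' a \<and> d a = d' a" by simp
  qed
next
  assume "\<forall>a<n. p a = p' a \<and> d a = d' a"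
  thus "M n p d = M n p' d'" by (auto simp: M_def fun_eq_iff)
qed

definition sw :: "nat \<Rightarrow> nat \<Rightarrow> nat \<Rightarrow> nat" where
  "sw i j a = (if a = i then j else if a = j then i else a)"

fun perm_of :: "refl \<Rightarrow> nat \<Rightarrow> nat" where
  "perm_of (Sig i j k) = sw i j"
| "perm_of (Tau i k) = id"

fun dg_of :: "nat \<Rightarrow> nat \<Rightarrow> refl \<Rightarrow> nat \<Rightarrow> complex" where
  "dg_of r s (Sig i j k) = (\<lambda>a. if a = i then inverse (zeta r ^ k) else if a = j then zeta r ^ k else 1)"
| "dg_of r s (Tau i k) = (\<lambda>a. if a = i then zeta r ^ (s * k) else 1)"

fun prm :: "refl list \<Rightarrow> nat \<Rightarrow> nat" where
  "prm [] = id"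
| "prm (x # xs) = perm_of x \<circ> prm xs"

fun dgl :: "nat \<Rightarrow> nat \<Rightarrow> refl list \<Rightarrow> nat \<Rightarrow> complex" where
  "dgl r s [] = (\<lambda>_. 1)"
| "dgl r s (x # xs) = (\<lambda>a. dgl r s xs a * dg_of r s x (prm xs a))"

lemma refl_M: "valid_refl r s n x \<Longrightarrow> refl_mat r s n x = M n (perm_of x) (dg_of r s x)"
  by (cases x) (auto simp: M_def fun_eq_iff sw_def)

lemma perm_of_lt: "valid_refl r s n x \<Longrightarrow> a < n \<Longrightarrow> perm_of x a < n"
  by (cases x) (auto simp: sw_def)

lemma prm_lt: "set xs \<subseteq> Refl r s n \<Longrightarrow> a < n \<Longrightarrow> prm xs a < n"
  by (induction xs arbitrary: a) (auto simp: Refl_def perm_of_lt)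

lemma fact_prod_M: "set xs \<subseteq> Refl r s n \<Longrightarrow> fact_prod r s n xs = M n (prm xs) (dgl r s xs)"
proof (induction xs)
  case Nil thus ?case by (simp add: fact_prod_def one_M id_def)
next
  case (Cons x xs)
  have v: "valid_refl r s n x" using Cons.prems by (simp add: Refl_def)
  have "fact_prod r s n (x # xs) = mat_mult n (fact_prod r s n xs) (refl_mat r s n x)"
    by (simp add: fact_prod_def)
  also have "\<dots> = mat_mult n (M n (prm xs) (dgl r s xs)) (M n (perm_of x) (dg_of r s x))"
    using Cons by (simp add: refl_M[OF v])
  also have "\<dots> = M n (prm (x # xs)) (dgl r s (x # xs))"
    using Cons.prems by (subst mult_M) (auto intro: prm_lt)
  finally show ?case .
qed

lemma dg_of_root: "0 < r \<Longrightarrow> dg_of r s x a ^ r = 1 \<and> dg_of r s x a \<noteq> 0"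
  by (cases x) (auto simp: zeta_root zeta_nz power_inverse)

lemma dgl_root: "0 < r \<Longrightarrow> dgl r s xs a ^ r = 1 \<and> dgl r s xs a \<noteq> 0"
  by (induction xs arbitrary: a) (auto simp: dg_of_root power_mult_distrib)



lemma grp_M:
  assumes "w \<in> Grp r s n"
  obtains pw dw where "w = M n pw dw" "\<forall>a<n. pw a < n" "\<forall>a<n. dw a \<noteq> 0 \<and> dw a ^ r = 1"
    "phi n w = (\<Prod>a<n. dw a)" "phi n w ^ (r div s) = 1" "piS w = M n pw (\<lambda>_. 1)"
proof -
  define pw where "pw a = (THE j. j < n \<and> w a j \<noteq> 0)" for a
  define dw where "dw a = w a (pw a)" for a
  have G: "\<forall>i j. (n \<le> i \<or> n \<le> j) \<longrightarrow> w i j = 0" "\<forall>i<n. \<exists>!j. j < n \<and> w i j \<noteq> 0"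
      "\<forall>i<n. \<forall>j<n. w i j \<noteq> 0 \<longrightarrow> w i j ^ r = 1" "phi n w \<in> mu (r div s)"
    using assms by (auto simp: Grp_def)
  have P: "pw a < n \<and> w a (pw a) \<noteq> 0" if "a < n" for a
    using theI'[OF G(2)[rule_format, OF that]] unfolding pw_def by blast
  have U: "j = pw a" if "a < n" "j < n" "w a j \<noteq> 0" for a j
    using G(2)[rule_format, OF that(1)] P[OF that(1)] that by blast
  have wM: "w = M n pw dw"
  proof (intro ext)
    fix a b show "w a b = M n pw dw a b"
      using G(1) P U by (cases "a < n \<and> b < n") (auto simp: M_def dw_def not_less, metis)
  qed
  have piM: "piS w = M n pw (\<lambda>_. 1)"
  proof (intro ext)
    fix a b show "piS w a b = M n pw (\<lambda>_. 1) a b"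
      using G(1) P U by (cases "a < n \<and> b < n") (auto simp: M_def piS_def not_less)
  qed
  have ph: "phi n w = (\<Prod>a<n. dw a)"
    unfolding phi_def
  proof (rule prod.cong[OF refl])
    fix a assume a: "a \<in> {..<n}"
    have "(\<Prod>j<n. if w a j = 0 then 1 else w a j) = (\<Prod>j<n. if j = pw a then dw a else 1)"
    proof (rule prod.cong[OF refl])
      fix j assume j: "j \<in> {..<n}"
      show "(if w a j = 0 then 1 else w a j) = (if j = pw a then dw a else 1)"
      proof (cases "j = pw a")
        case True thus ?thesis using P[of a] a by (simp add: dw_def)
      next
        case False
        hence "w a j = 0" using U[of a j] a j by auto
        thus ?thesis using False by simp
      qed
    qed
    also have "\<dots> = dw a" using P a by (subst prod.delta) auto
    finally show "(\<Prod>j<n. if w a j = 0 then 1 else w a j) = dw a" .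
  qed
  show ?thesis
    apply (rule that[OF wM])
    using P G(3) G(4) ph piM by (auto simp: dw_def mu_def)
qed



fun fill :: "refl list \<Rightarrow> nat list \<Rightarrow> refl list" where
  "fill [] ks = []"
| "fill (Sig i j k # t) ks = Sig i j (hd ks) # fill t (tl ks)"
| "fill (Tau i k # t) ks = Tau i k # fill t ks"

definition nsig :: "refl list \<Rightarrow> nat" where "nsig t = length (filter is_Sig t)"

definition Rl :: "refl list \<Rightarrow> (nat \<times> nat) set" where
  "Rl t = (fact_edges t \<union> (fact_edges t)\<inverse>)\<^sup>*"

definition cls :: "refl list \<Rightarrow> nat \<Rightarrow> nat set" where "cls t x = Rl t `` {x}"

definition classes :: "nat \<Rightarrow> refl list \<Rightarrow> nat set set" where "classes n t = cls t ` {..<n}"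

fun tp :: "nat \<Rightarrow> nat \<Rightarrow> nat set \<Rightarrow> refl \<Rightarrow> complex" where
  "tp r s C (Sig i j k) = 1"
| "tp r s C (Tau i k) = (if i \<in> C then zeta r ^ (s * k) else 1)"

definition taup :: "nat \<Rightarrow> nat \<Rightarrow> refl list \<Rightarrow> nat set \<Rightarrow> complex" where
  "taup r s t C = prod_list (map (tp r s C) t)"

definition cond :: "nat \<Rightarrow> nat \<Rightarrow> nat \<Rightarrow> refl list \<Rightarrow> (nat \<Rightarrow> complex) \<Rightarrow> bool" where
  "cond r s n t D = (\<forall>x<n. (\<Prod>c\<in>cls t x. D c) = taup r s t (cls t x))"

lemma prm_fill: "prm (fill t ks) = prm t"
  by (induction t ks rule: fill.induct) auto

lemma nsig_simps [simp]: "nsig [] = 0" "nsig (Sig i j k # t) = Suc (nsig t)" "nsig (Tau i k # t) = nsig t"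
  by (auto simp: nsig_def)

lemma fill_valid: "set t \<subseteq> Refl r s n \<Longrightarrow> length ks = nsig t \<Longrightarrow> set ks \<subseteq> {..<r} \<Longrightarrow>
   set (fill t ks) \<subseteq> Refl r s n"
proof (induction t ks rule: fill.induct)
  case (2 i j k t ks)
  then obtain k' ks' where "ks = k' # ks'" by (cases ks) auto
  thus ?case using 2 by (auto simp: Refl_def)
qed (auto simp: Refl_def)

lemma fact_edges_simps [simp]: "fact_edges [] = {}" "fact_edges (Sig a b k # t) = insert (a, b) (fact_edges t)"
  "fact_edges (Tau a k # t) = fact_edges t"
  by (auto simp: fact_edges_def)

lemma fact_edges_lt: "set t \<subseteq> Refl r s n \<Longrightarrow> fact_edges t \<subseteq> {..<n} \<times> {..<n}"
  by (auto simp: fact_edges_def Refl_def)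

lemma Rl_sym: "(u, v) \<in> Rl t \<Longrightarrow> (v, u) \<in> Rl t"
proof -
  assume "(u, v) \<in> Rl t"
  hence "(v, u) \<in> ((fact_edges t \<union> (fact_edges t)\<inverse>)\<inverse>)\<^sup>*"
    unfolding Rl_def by (simp add: rtrancl_converseI)
  moreover have "(fact_edges t \<union> (fact_edges t)\<inverse>)\<inverse> = fact_edges t \<union> (fact_edges t)\<inverse>" by auto
  ultimately show ?thesis unfolding Rl_def by simp
qed

lemma Rl_trans: "(u, v) \<in> Rl t \<Longrightarrow> (v, w) \<in> Rl t \<Longrightarrow> (u, w) \<in> Rl t"
  unfolding Rl_def by (rule rtrancl_trans)

lemma Rl_refl [simp]: "(u, u) \<in> Rl t"
  unfolding Rl_def by simp

lemma Rl_Tau [simp]: "Rl (Tau a k # t) = Rl t"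
  by (simp add: Rl_def)

lemma Rl_Nil: "Rl [] = Id"
  by (simp add: Rl_def)

lemma Rl_Sig: "(x, y) \<in> Rl (Sig a b k # t) \<longleftrightarrow>
   (x, y) \<in> Rl t \<or> ((x, a) \<in> Rl t \<and> (b, y) \<in> Rl t) \<or> ((x, b) \<in> Rl t \<and> (a, y) \<in> Rl t)"
proof
  let ?S = "fact_edges t \<union> (fact_edges t)\<inverse>"
  let ?S' = "fact_edges (Sig a b k # t) \<union> (fact_edges (Sig a b k # t))\<inverse>"
  have S': "?S' = ?S \<union> {(a, b), (b, a)}" by auto
  have sub: "Rl t \<subseteq> Rl (Sig a b k # t)" unfolding Rl_def by (rule rtrancl_mono) auto
  have ab: "(a, b) \<in> Rl (Sig a b k # t)" "(b, a) \<in> Rl (Sig a b k # t)" unfolding Rl_def by auto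
  {
    assume "(x, y) \<in> Rl (Sig a b k # t)"
    hence "(x, y) \<in> ?S'\<^sup>*" by (simp add: Rl_def)
    thus "(x, y) \<in> Rl t \<or> ((x, a) \<in> Rl t \<and> (b, y) \<in> Rl t) \<or> ((x, b) \<in> Rl t \<and> (a, y) \<in> Rl t)"
    proof (induction rule: rtrancl_induct)
      case base thus ?case by simp
    next
      case (step y z)
      show ?case
      proof (cases "(y, z) \<in> ?S")
        case True
        hence yz: "(y, z) \<in> Rl t" unfolding Rl_def by auto
        thus ?thesis using step.IH Rl_trans by blast
      next
        case False
        hence "(y = a \<and> z = b) \<or> (y = b \<and> z = a)" using step.hyps(2) S' by auto
        thus ?thesis using step.IH Rl_trans Rl_sym Rl_refl by blast
      qed
    qed
  }
  {
    assume "(x, y) \<in> Rl t \<or> ((x, a) \<in> Rl t \<and> (b, y) \<in> Rl t) \<or> ((x, b) \<in> Rl t \<and> (a, y) \<in> Rl t)"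
    thus "(x, y) \<in> Rl (Sig a b k # t)" using sub ab Rl_trans by blast
  }
qed

lemma cls_lt: "set t \<subseteq> Refl r s n \<Longrightarrow> x < n \<Longrightarrow> cls t x \<subseteq> {..<n}"
proof
  fix y assume v: "set t \<subseteq> Refl r s n" and x: "x < n" and "y \<in> cls t x"
  hence "(x, y) \<in> (fact_edges t \<union> (fact_edges t)\<inverse>)\<^sup>*" by (simp add: cls_def Rl_def)
  thus "y \<in> {..<n}"
    by (induction rule: rtrancl_induct) (use x fact_edges_lt[OF v] in auto)
qed

lemma cls_finite: "set t \<subseteq> Refl r s n \<Longrightarrow> x < n \<Longrightarrow> finite (cls t x)"
  by (rule finite_subset[OF cls_lt]) auto

lemma cls_self [simp]: "x \<in> cls t x"
  by (simp add: cls_def)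

lemma cls_eq: "y \<in> cls t x \<Longrightarrow> cls t y = cls t x"
  unfolding cls_def using Rl_sym[of _ _ t] Rl_trans[of _ _ t] by blast

lemma cls_disj: "cls t x \<noteq> cls t y \<Longrightarrow> cls t x \<inter> cls t y = {}"
  using cls_eq by blast

lemma cls_Sig: "cls (Sig a b k # t) x =
   (if x \<in> cls t a \<union> cls t b then cls t a \<union> cls t b else cls t x)"
proof -
  have e: "\<And>y. y \<in> cls (Sig a b k # t) x \<longleftrightarrow>
     (x, y) \<in> Rl t \<or> ((x, a) \<in> Rl t \<and> (b, y) \<in> Rl t) \<or> ((x, b) \<in> Rl t \<and> (a, y) \<in> Rl t)"
    by (simp add: cls_def Rl_Sig)
  have s: "\<And>u v. (u, v) \<in> Rl t \<Longrightarrow> (v, u) \<in> Rl t" by (rule Rl_sym)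
  have tr: "\<And>u v w. (u, v) \<in> Rl t \<Longrightarrow> (v, w) \<in> Rl t \<Longrightarrow> (u, w) \<in> Rl t" by (rule Rl_trans)
  show ?thesis
  proof (cases "x \<in> cls t a \<union> cls t b")
    case True
    hence xab: "(x, a) \<in> Rl t \<or> (x, b) \<in> Rl t" using s by (auto simp: cls_def)
    have "y \<in> cls (Sig a b k # t) x \<longleftrightarrow> y \<in> cls t a \<union> cls t b" for y
    proof (cases "(x, a) \<in> Rl t")
      case True
      have 1: "(x, y) \<in> Rl t \<longleftrightarrow> (a, y) \<in> Rl t" using True s tr by blast
      have 2: "(x, b) \<in> Rl t \<Longrightarrow> (b, a) \<in> Rl t" using True s tr by blast
      show ?thesis unfolding cls_def Un_iff Image_singleton_iff Rl_Sig 1 using True 2 tr by blast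
    next
      case False
      hence xb: "(x, b) \<in> Rl t" using xab by simp
      have 1: "(x, y) \<in> Rl t \<longleftrightarrow> (b, y) \<in> Rl t" using xb s tr by blast
      show ?thesis unfolding cls_def Un_iff Image_singleton_iff Rl_Sig 1 using False xb by blast
    qed
    thus ?thesis using True by auto
  next
    case False
    hence "(x, a) \<notin> Rl t \<and> (x, b) \<notin> Rl t" using s by (auto simp: cls_def)
    hence "\<And>y. y \<in> cls (Sig a b k # t) x \<longleftrightarrow> y \<in> cls t x"
      unfolding e by (simp add: cls_def)
    thus ?thesis using False by auto
  qed
qed

lemma cls_Sig_same: assumes "(a, b) \<in> Rl t" shows "cls (Sig a b k # t) x = cls t x"
proof -
  have "b \<in> cls t a" using assms by (simp add: cls_def)
  hence "cls t b = cls t a" by (rule cls_eq)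
  moreover have "x \<in> cls t a \<Longrightarrow> cls t x = cls t a" using cls_eq[of x t a] by simp
  ultimately show ?thesis by (simp add: cls_Sig)
qed

lemma prm_Rl: "set t \<subseteq> Refl r s n \<Longrightarrow> (c, prm t c) \<in> Rl t"
proof (induction t arbitrary: c)
  case Nil thus ?case by simp
next
  case (Cons x t)
  show ?case
  proof (cases x)
    case (Sig a b k)
    have sub: "Rl t \<subseteq> Rl (x # t)" unfolding Rl_def Sig by (rule rtrancl_mono) auto
    have ab: "(a, b) \<in> Rl (x # t)" "(b, a) \<in> Rl (x # t)" unfolding Rl_def Sig by auto
    have "(c, prm t c) \<in> Rl (x # t)" using Cons sub by auto
    moreover have "(prm t c, sw a b (prm t c)) \<in> Rl (x # t)" using ab by (auto simp: sw_def)
    ultimately show ?thesis using Sig Rl_trans by auto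
  next
    case (Tau a k) thus ?thesis using Cons by auto
  qed
qed

lemma sw_bij: "a < n \<Longrightarrow> b < n \<Longrightarrow> bij_betw (sw a b) {..<n} {..<n}"
  by (rule bij_betw_byWitness[where f'="sw a b"]) (auto simp: sw_def)

lemma prm_bij: "set t \<subseteq> Refl r s n \<Longrightarrow> bij_betw (prm t) {..<n} {..<n}"
proof (induction t)
  case Nil thus ?case by (simp add: bij_betw_def)
next
  case (Cons x t)
  hence b: "bij_betw (prm t) {..<n} {..<n}" and v: "valid_refl r s n x" by (auto simp: Refl_def)
  have "bij_betw (perm_of x) {..<n} {..<n}"
    using v by (cases x) (auto intro: sw_bij bij_betw_id)
  from bij_betw_trans[OF b this] show ?case by (simp add: comp_def)
qed

lemma prod_cls_prm:
  assumes v: "set t \<subseteq> Refl r s n" and x: "x < n"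
  shows "(\<Prod>c\<in>cls t x. g (prm t c)) = (\<Prod>c\<in>cls t x. g c)"
proof -
  let ?C = "cls t x"
  have im: "prm t ` ?C \<subseteq> ?C"
    using prm_Rl[OF v] Rl_trans by (auto simp: cls_def)
  have inj: "inj_on (prm t) ?C"
    using prm_bij[OF v] cls_lt[OF v x] by (auto simp: bij_betw_def intro: inj_on_subset)
  have "prm t ` ?C = ?C" by (rule endo_inj_surj[OF cls_finite[OF v x] im inj])
  thus ?thesis using prod.reindex[OF inj, of g] by simp
qed

lemma taup_simps [simp]: "taup r s [] C = 1" "taup r s (Sig a b k # t) C = taup r s t C"
  "taup r s (Tau a k # t) C = (if a \<in> C then zeta r ^ (s * k) else 1) * taup r s t C"
  by (auto simp: taup_def)

lemma taup_union: "A \<inter> B = {} \<Longrightarrow> taup r s t (A \<union> B) = taup r s t A * taup r s t B"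
proof (induction t)
  case (Cons x t) thus ?case by (cases x) auto
qed simp

lemma taup_root: "0 < r \<Longrightarrow> taup r s t C ^ r = 1 \<and> taup r s t C \<noteq> 0"
proof (induction t)
  case (Cons x t) thus ?case by (cases x) (auto simp: zeta_root zeta_nz power_mult_distrib)
qed simp



lemma classes_finite: "finite (classes n t)"
  by (simp add: classes_def)

lemma classes_Sig_diff:
  assumes v: "set t \<subseteq> Refl r s n" and a: "a < n" and b: "b < n" and ab: "(a, b) \<notin> Rl t"
  shows "card (classes n (Sig a b k # t)) + 1 = card (classes n t)"
proof -
  let ?Ca = "cls t a" and ?Cb = "cls t b"
  have bCa: "b \<notin> ?Ca" using ab by (simp add: cls_def)
  have neq: "?Ca \<noteq> ?Cb" using bCa cls_self[of b t] by blast
  have eq: "classes n (Sig a b k # t) = insert (?Ca \<union> ?Cb) (classes n t - {?Ca, ?Cb})"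
  proof
    show "classes n (Sig a b k # t) \<subseteq> insert (?Ca \<union> ?Cb) (classes n t - {?Ca, ?Cb})"
    proof
      fix C assume "C \<in> classes n (Sig a b k # t)"
      then obtain x where x: "x < n" "C = cls (Sig a b k # t) x" by (auto simp: classes_def)
      show "C \<in> insert (?Ca \<union> ?Cb) (classes n t - {?Ca, ?Cb})"
      proof (cases "x \<in> ?Ca \<union> ?Cb")
        case True thus ?thesis using x by (simp add: cls_Sig)
      next
        case False
        hence "cls t x \<noteq> ?Ca" "cls t x \<noteq> ?Cb" using cls_self[of x t] by blast+
        thus ?thesis using x False by (auto simp: cls_Sig classes_def)
      qed
    qed
  next
    show "insert (?Ca \<union> ?Cb) (classes n t - {?Ca, ?Cb}) \<subseteq> classes n (Sig a b k # t)"
    proof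
      fix C assume C: "C \<in> insert (?Ca \<union> ?Cb) (classes n t - {?Ca, ?Cb})"
      show "C \<in> classes n (Sig a b k # t)"
      proof (cases "C = ?Ca \<union> ?Cb")
        case True
        have "cls (Sig a b k # t) a = ?Ca \<union> ?Cb" by (simp add: cls_Sig)
        thus ?thesis using True a by (auto simp: classes_def)
      next
        case False
        then obtain x where x: "x < n" "C = cls t x" "C \<noteq> ?Ca" "C \<noteq> ?Cb" using C by (auto simp: classes_def)
        have "x \<notin> ?Ca \<union> ?Cb" using x cls_eq[of x t a] cls_eq[of x t b] by auto
        hence "cls (Sig a b k # t) x = C" using x by (simp add: cls_Sig)
        thus ?thesis using x by (auto simp: classes_def)
      qed
    qed
  qed
  have notin: "?Ca \<union> ?Cb \<notin> classes n t - {?Ca, ?Cb}"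
  proof
    assume "?Ca \<union> ?Cb \<in> classes n t - {?Ca, ?Cb}"
    then obtain x where x: "?Ca \<union> ?Cb = cls t x" by (auto simp: classes_def)
    hence "a \<in> cls t x" using cls_self[of a t] by blast
    hence "cls t a = cls t x" by (rule cls_eq)
    hence "b \<in> ?Ca" using x cls_self[of b t] by blast
    thus False using bCa by simp
  qed
  have sub: "{?Ca, ?Cb} \<subseteq> classes n t" using a b by (auto simp: classes_def)
  have c2: "card {?Ca, ?Cb} = 2" using neq by simp
  have "card (classes n t - {?Ca, ?Cb}) = card (classes n t) - 2"
    using card_Diff_subset[OF _ sub] c2 by simp
  moreover have "card (classes n t) \<ge> 2" using card_mono[OF classes_finite sub] c2 by simp
  ultimately show ?thesis unfolding eq using notin classes_finite[of n t]
    by (simp add: card_insert_disjoint)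
qed

lemma classes_Nil: "card (classes n []) = n"
proof -
  have "cls [] = (\<lambda>x. {x})" by (auto simp: cls_def Rl_Nil)
  hence "classes n [] = (\<lambda>x. {x}) ` {..<n}" by (simp add: classes_def)
  thus ?thesis by (simp add: card_image)
qed

lemma prod_inv_dg_tau: "finite C \<Longrightarrow>
   (\<Prod>c\<in>C. inverse (dg_of r s (Tau a k) c)) = (if a \<in> C then inverse (zeta r ^ (s * k)) else 1)"
proof -
  assume C: "finite C"
  have "(\<Prod>c\<in>C. inverse (dg_of r s (Tau a k) c)) = (\<Prod>c\<in>C. if c = a then inverse (zeta r ^ (s * k)) else 1)"
    by (rule prod.cong) auto
  also have "\<dots> = (if a \<in> C then inverse (zeta r ^ (s * k)) else 1)" using C by (simp add: prod.delta')
  finally show ?thesis .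
qed

lemma prod_inv_dg_sig: "finite C \<Longrightarrow> a \<noteq> b \<Longrightarrow>
   (\<Prod>c\<in>C. inverse (dg_of r s (Sig a b k) c)) =
     (if a \<in> C then zeta r ^ k else 1) * (if b \<in> C then inverse (zeta r ^ k) else 1)"
proof -
  assume C: "finite C" and ab: "a \<noteq> b"
  have "(\<Prod>c\<in>C. inverse (dg_of r s (Sig a b k) c)) =
        (\<Prod>c\<in>C. (if c = a then zeta r ^ k else 1) * (if c = b then inverse (zeta r ^ k) else 1))"
    using ab by (intro prod.cong) auto
  also have "\<dots> = (\<Prod>c\<in>C. if c = a then zeta r ^ k else 1) * (\<Prod>c\<in>C. if c = b then inverse (zeta r ^ k) else 1)"
    by (rule prod.distrib)
  also have "\<dots> = (if a \<in> C then zeta r ^ k else 1) * (if b \<in> C then inverse (zeta r ^ k) else 1)"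
    using C by (simp add: prod.delta')
  finally show ?thesis .
qed

lemma prod_root: "finite (C::nat set) \<Longrightarrow> (\<forall>c\<in>C. (D c::complex) ^ r = 1) \<Longrightarrow> (\<Prod>c\<in>C. D c) ^ r = 1"
proof -
  assume "finite C" "\<forall>c\<in>C. D c ^ r = 1"
  hence "(\<Prod>c\<in>C. D c ^ r) = 1" by (intro prod.neutral) simp
  thus ?thesis using prod_power_distrib[of D C r] by simp
qed



definition SS :: "nat \<Rightarrow> nat \<Rightarrow> nat \<Rightarrow> refl list \<Rightarrow> (nat \<Rightarrow> complex) \<Rightarrow> nat list set" where
  "SS r s n t D = {ks. length ks = nsig t \<and> set ks \<subseteq> {..<r} \<and> (\<forall>c<n. dgl r s (fill t ks) c = D c)}"

lemma SS_finite: "finite (SS r s n t D)"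
proof -
  have "SS r s n t D \<subseteq> {ks. set ks \<subseteq> {..<r} \<and> length ks = nsig t}" by (auto simp: SS_def)
  thus ?thesis using finite_lists_length_eq[of "{..<r}" "nsig t"] finite_subset by blast
qed

lemma eq_mult_inv: "(g::complex) \<noteq> 0 \<Longrightarrow> (x * g = D) \<longleftrightarrow> (x = D * inverse g)"
  by (auto simp: field_simps)

lemma SS_Tau: assumes "0 < r"
  shows "SS r s n (Tau a k # t) D = SS r s n t (\<lambda>c. D c * inverse (dg_of r s (Tau a k) (prm t c)))"
  using dg_of_root[OF assms] by (auto simp: SS_def prm_fill eq_mult_inv simp del: dg_of.simps)

lemma SS_Sig: assumes "0 < r"
  shows "SS r s n (Sig a b k0 # t) D = (\<lambda>(k, ks). k # ks) `
     (SIGMA k:{..<r}. SS r s n t (\<lambda>c. D c * inverse (dg_of r s (Sig a b k) (prm t c))))"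
proof
  show "SS r s n (Sig a b k0 # t) D \<subseteq> (\<lambda>(k, ks). k # ks) `
     (SIGMA k:{..<r}. SS r s n t (\<lambda>c. D c * inverse (dg_of r s (Sig a b k) (prm t c))))"
  proof
    fix ks assume h: "ks \<in> SS r s n (Sig a b k0 # t) D"
    then obtain k ks' where ks: "ks = k # ks'" by (cases ks) (auto simp: SS_def)
    have "ks' \<in> SS r s n t (\<lambda>c. D c * inverse (dg_of r s (Sig a b k) (prm t c)))" "k < r"
      using h dg_of_root[OF assms] unfolding ks
      by (auto simp: SS_def prm_fill eq_mult_inv simp del: dg_of.simps)
    thus "ks \<in> (\<lambda>(k, ks). k # ks) `
     (SIGMA k:{..<r}. SS r s n t (\<lambda>c. D c * inverse (dg_of r s (Sig a b k) (prm t c))))"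
      unfolding ks by auto
  qed
next
  show "(\<lambda>(k, ks). k # ks) ` (SIGMA k:{..<r}. SS r s n t (\<lambda>c. D c * inverse (dg_of r s (Sig a b k) (prm t c))))
     \<subseteq> SS r s n (Sig a b k0 # t) D"
    using dg_of_root[OF assms] by (auto simp: SS_def prm_fill eq_mult_inv simp del: dg_of.simps)
qed

lemma card_SS_Sig: assumes "0 < r"
  shows "card (SS r s n (Sig a b k0 # t) D) =
    (\<Sum>k<r. card (SS r s n t (\<lambda>c. D c * inverse (dg_of r s (Sig a b k) (prm t c)))))"
proof -
  have inj: "inj_on (\<lambda>(k, ks). k # ks) X" for X :: "(nat \<times> nat list) set"
    by (auto simp: inj_on_def)
  show ?thesis unfolding SS_Sig[OF assms] card_image[OF inj]
    by (subst card_SigmaI) (auto simp: SS_finite)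
qed



lemma cls_Tau [simp]: "cls (Tau a k # t) = cls t"
  by (simp add: cls_def fun_eq_iff)

lemma classes_Tau [simp]: "classes n (Tau a k # t) = classes n t"
  by (simp add: classes_def)

lemma prod_D': assumes v: "set t \<subseteq> Refl r s n" and x: "x < n"
  shows "(\<Prod>c\<in>cls t x. D c * inverse (g (prm t c))) = (\<Prod>c\<in>cls t x. D c) * (\<Prod>c\<in>cls t x. inverse (g c))"
proof -
  have "(\<Prod>c\<in>cls t x. D c * inverse (g (prm t c))) = (\<Prod>c\<in>cls t x. D c) * (\<Prod>c\<in>cls t x. inverse (g (prm t c)))"
    by (rule prod.distrib)
  also have "(\<Prod>c\<in>cls t x. inverse (g (prm t c))) = (\<Prod>c\<in>cls t x. inverse (g c))"
    by (rule prod_cls_prm[OF v x])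
  finally show ?thesis .
qed

lemma cond_Tau: assumes v: "set (Tau a k # t) \<subseteq> Refl r s n"
  shows "cond r s n (Tau a k # t) D \<longleftrightarrow> cond r s n t (\<lambda>c. D c * inverse (dg_of r s (Tau a k) (prm t c)))"
proof -
  have v': "set t \<subseteq> Refl r s n" using v by simp
  have u: "zeta r ^ (s * k) \<noteq> 0" by (rule zeta_nz)
  have "(\<Prod>c\<in>cls t x. D c) = taup r s (Tau a k # t) (cls t x) \<longleftrightarrow>
        (\<Prod>c\<in>cls t x. D c * inverse (dg_of r s (Tau a k) (prm t c))) = taup r s t (cls t x)"
    if x: "x < n" for x
  proof -
    have "(\<Prod>c\<in>cls t x. D c * inverse (dg_of r s (Tau a k) (prm t c))) =
          (\<Prod>c\<in>cls t x. D c) * (if a \<in> cls t x then inverse (zeta r ^ (s * k)) else 1)"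
      unfolding prod_D'[OF v' x] prod_inv_dg_tau[OF cls_finite[OF v' x]] ..
    thus ?thesis using u by (auto simp: field_simps)
  qed
  thus ?thesis unfolding cond_def by simp
qed

lemma cls_Sig_same_all: "(a, b) \<in> Rl t \<Longrightarrow> cls (Sig a b k # t) = cls t"
  using cls_Sig_same by (auto simp: fun_eq_iff)

lemma ab_cls: "a \<in> C \<longleftrightarrow> b \<in> C" if "(a, b) \<in> Rl t" "C = cls t x"
  using that Rl_sym Rl_trans unfolding cls_def by blast

lemma cond_Sig_same: assumes v: "set (Sig a b k0 # t) \<subseteq> Refl r s n" and ab: "(a, b) \<in> Rl t"
  shows "cond r s n t (\<lambda>c. D c * inverse (dg_of r s (Sig a b k) (prm t c))) \<longleftrightarrow> cond r s n (Sig a b k0 # t) D"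
proof -
  have v': "set t \<subseteq> Refl r s n" and anb: "a \<noteq> b" using v by (auto simp: Refl_def)
  have "(\<Prod>c\<in>cls t x. D c * inverse (dg_of r s (Sig a b k) (prm t c))) = (\<Prod>c\<in>cls t x. D c)"
    if x: "x < n" for x
  proof -
    have ii: "a \<in> cls t x \<longleftrightarrow> b \<in> cls t x" using ab_cls[OF ab refl] .
    have "(\<Prod>c\<in>cls t x. D c * inverse (dg_of r s (Sig a b k) (prm t c))) =
          (\<Prod>c\<in>cls t x. D c) * ((if a \<in> cls t x then zeta r ^ k else 1) * (if b \<in> cls t x then inverse (zeta r ^ k) else 1))"
      unfolding prod_D'[OF v' x] prod_inv_dg_sig[OF cls_finite[OF v' x] anb] ..
    also have "\<dots> = (\<Prod>c\<in>cls t x. D c)" using ii zeta_nz[of r k] by auto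
    finally show ?thesis .
  qed
  thus ?thesis unfolding cond_def cls_Sig_same_all[OF ab] by simp
qed



lemma count_k: assumes r: "0 < r" and nz: "X \<noteq> 0" "Y \<noteq> 0" "TA \<noteq> 0" and rt: "X ^ r = 1" "TA ^ r = 1"
  shows "card {k \<in> {..<r}. Q \<and> X * zeta r ^ k = TA \<and> Y * inverse (zeta r ^ k) = TB} =
     (if Q \<and> X * Y = TA * TB then 1 else 0)"
proof -
  have "(TA / X) ^ r = 1" using rt by (simp add: power_divide)
  then obtain k0 where k0: "k0 < r" "zeta r ^ k0 = TA / X" and un: "\<And>l. l < r \<Longrightarrow> zeta r ^ l = TA / X \<Longrightarrow> l = k0"
    using zeta_ex1[OF r] by metis
  have iff: "X * zeta r ^ k = TA \<longleftrightarrow> zeta r ^ k = TA / X" for k using nz by (auto simp: field_simps)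
  show ?thesis
  proof (cases "Q \<and> X * Y = TA * TB")
    case True
    have "{k \<in> {..<r}. Q \<and> X * zeta r ^ k = TA \<and> Y * inverse (zeta r ^ k) = TB} = {k0}"
    proof (intro set_eqI iffI)
      fix k assume "k \<in> {k \<in> {..<r}. Q \<and> X * zeta r ^ k = TA \<and> Y * inverse (zeta r ^ k) = TB}"
      thus "k \<in> {k0}" using un iff by auto
    next
      fix k assume "k \<in> {k0}"
      hence k: "k = k0" by simp
      have xz: "X * zeta r ^ k0 = TA" using k0 nz by (simp add: field_simps)
      have "X * Y = X * (TB * zeta r ^ k0)" using True xz by (simp add: mult_ac)
      hence "Y = TB * zeta r ^ k0" using nz by simp
      hence "Y * inverse (zeta r ^ k0) = TB" using zeta_nz[of r k0] by simp
      thus "k \<in> {k \<in> {..<r}. Q \<and> X * zeta r ^ k = TA \<and> Y * inverse (zeta r ^ k) = TB}"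
        using k k0 True iff by auto
    qed
    thus ?thesis using True by simp
  next
    case False
    have "{k \<in> {..<r}. Q \<and> X * zeta r ^ k = TA \<and> Y * inverse (zeta r ^ k) = TB} = {}"
    proof (intro set_eqI iffI)
      fix k assume "k \<in> {k \<in> {..<r}. Q \<and> X * zeta r ^ k = TA \<and> Y * inverse (zeta r ^ k) = TB}"
      hence h: "Q" "X * zeta r ^ k = TA" "Y * inverse (zeta r ^ k) = TB" by auto
      have "X * Y = (X * zeta r ^ k) * (Y * inverse (zeta r ^ k))" using zeta_nz[of r k] by (simp add: field_simps)
      thus "k \<in> {}" using h False by simp
    qed simp
    note e = this
    show ?thesis unfolding e using False by simp
  qed
qed

lemma cond_Sig_diff_k:
  assumes v: "set (Sig a b k0 # t) \<subseteq> Refl r s n" and ab: "(a, b) \<notin> Rl t"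
  shows "cond r s n t (\<lambda>c. D c * inverse (dg_of r s (Sig a b k) (prm t c))) \<longleftrightarrow>
    (\<forall>x<n. x \<notin> cls t a \<union> cls t b \<longrightarrow> (\<Prod>c\<in>cls t x. D c) = taup r s t (cls t x)) \<and>
    (\<Prod>c\<in>cls t a. D c) * zeta r ^ k = taup r s t (cls t a) \<and>
    (\<Prod>c\<in>cls t b. D c) * inverse (zeta r ^ k) = taup r s t (cls t b)"
proof -
  have v': "set t \<subseteq> Refl r s n" and anb: "a \<noteq> b" and a: "a < n" and b: "b < n"
    using v by (auto simp: Refl_def)
  have bCa: "b \<notin> cls t a" using ab by (simp add: cls_def)
  have aCb: "a \<notin> cls t b" using ab Rl_sym by (auto simp: cls_def)
  let ?P = "\<lambda>x. (\<Prod>c\<in>cls t x. D c * inverse (dg_of r s (Sig a b k) (prm t c)))"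
  have P: "?P x = (\<Prod>c\<in>cls t x. D c) * ((if a \<in> cls t x then zeta r ^ k else 1) * (if b \<in> cls t x then inverse (zeta r ^ k) else 1))"
    if x: "x < n" for x
    unfolding prod_D'[OF v' x] prod_inv_dg_sig[OF cls_finite[OF v' x] anb] ..
  have Pa: "?P a = (\<Prod>c\<in>cls t a. D c) * zeta r ^ k" using P[OF a] bCa by simp
  have Pb: "?P b = (\<Prod>c\<in>cls t b. D c) * inverse (zeta r ^ k)" using P[OF b] aCb by simp
  have Po: "?P x = (\<Prod>c\<in>cls t x. D c)" if "x < n" "x \<notin> cls t a \<union> cls t b" for x
  proof -
    have "a \<notin> cls t x" using that cls_eq[of a t x] cls_self[of x t] by auto
    moreover have "b \<notin> cls t x" using that cls_eq[of b t x] cls_self[of x t] by auto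
    ultimately show ?thesis using P[OF that(1)] by simp
  qed
  have Ca: "x \<in> cls t a \<Longrightarrow> cls t x = cls t a" for x by (rule cls_eq)
  have Cb: "x \<in> cls t b \<Longrightarrow> cls t x = cls t b" for x by (rule cls_eq)
  show ?thesis
  proof
    assume c: "cond r s n t (\<lambda>c. D c * inverse (dg_of r s (Sig a b k) (prm t c)))"
    hence c': "\<And>x. x < n \<Longrightarrow> ?P x = taup r s t (cls t x)" unfolding cond_def by blast
    show "(\<forall>x<n. x \<notin> cls t a \<union> cls t b \<longrightarrow> (\<Prod>c\<in>cls t x. D c) = taup r s t (cls t x)) \<and>
    (\<Prod>c\<in>cls t a. D c) * zeta r ^ k = taup r s t (cls t a) \<and>
    (\<Prod>c\<in>cls t b. D c) * inverse (zeta r ^ k) = taup r s t (cls t b)"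
      using c'[OF a] c'[OF b] Pa Pb Po c' by auto
  next
    assume h: "(\<forall>x<n. x \<notin> cls t a \<union> cls t b \<longrightarrow> (\<Prod>c\<in>cls t x. D c) = taup r s t (cls t x)) \<and>
    (\<Prod>c\<in>cls t a. D c) * zeta r ^ k = taup r s t (cls t a) \<and>
    (\<Prod>c\<in>cls t b. D c) * inverse (zeta r ^ k) = taup r s t (cls t b)"
    have "?P x = taup r s t (cls t x)" if x: "x < n" for x
    proof (cases "x \<in> cls t a")
      case True thus ?thesis using Ca[OF True] Pa h by simp
    next
      case F1: False
      show ?thesis
      proof (cases "x \<in> cls t b")
        case True thus ?thesis using Cb[OF True] Pb h by simp
      next
        case False thus ?thesis using F1 Po[OF x] h x by auto
      qed
    qed
    thus "cond r s n t (\<lambda>c. D c * inverse (dg_of r s (Sig a b k) (prm t c)))" unfolding cond_def by blast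
  qed
qed

lemma cond_Sig_diff:
  assumes v: "set (Sig a b k0 # t) \<subseteq> Refl r s n" and ab: "(a, b) \<notin> Rl t"
  shows "cond r s n (Sig a b k0 # t) D \<longleftrightarrow>
    (\<forall>x<n. x \<notin> cls t a \<union> cls t b \<longrightarrow> (\<Prod>c\<in>cls t x. D c) = taup r s t (cls t x)) \<and>
    (\<Prod>c\<in>cls t a. D c) * (\<Prod>c\<in>cls t b. D c) = taup r s t (cls t a) * taup r s t (cls t b)"
proof -
  have v': "set t \<subseteq> Refl r s n" and a: "a < n" and b: "b < n"
    using v by (auto simp: Refl_def)
  have bCa: "b \<notin> cls t a" using ab by (simp add: cls_def)
  have disj: "cls t a \<inter> cls t b = {}"
    using cls_disj[of t a b] bCa cls_self[of b t] by blast
  have U: "(\<Prod>c\<in>cls t a \<union> cls t b. D c) = (\<Prod>c\<in>cls t a. D c) * (\<Prod>c\<in>cls t b. D c)"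
    using disj cls_finite[OF v' a] cls_finite[OF v' b] by (simp add: prod.union_disjoint)
  have T: "taup r s t (cls t a \<union> cls t b) = taup r s t (cls t a) * taup r s t (cls t b)"
    using disj by (rule taup_union)
  show ?thesis
    unfolding cond_def
  proof
    assume c: "\<forall>x<n. (\<Prod>c\<in>cls (Sig a b k0 # t) x. D c) = taup r s (Sig a b k0 # t) (cls (Sig a b k0 # t) x)"
    have ca: "(\<Prod>c\<in>cls t a \<union> cls t b. D c) = taup r s t (cls t a \<union> cls t b)"
      using c[rule_format, OF a] by (simp add: cls_Sig)
    have co: "\<forall>x<n. x \<notin> cls t a \<union> cls t b \<longrightarrow> (\<Prod>c\<in>cls t x. D c) = taup r s t (cls t x)"
      using c by (auto simp: cls_Sig)
    show "(\<forall>x<n. x \<notin> cls t a \<union> cls t b \<longrightarrow> (\<Prod>c\<in>cls t x. D c) = taup r s t (cls t x)) \<and>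
      (\<Prod>c\<in>cls t a. D c) * (\<Prod>c\<in>cls t b. D c) = taup r s t (cls t a) * taup r s t (cls t b)"
      using ca co U T by simp
  next
    assume h: "(\<forall>x<n. x \<notin> cls t a \<union> cls t b \<longrightarrow> (\<Prod>c\<in>cls t x. D c) = taup r s t (cls t x)) \<and>
      (\<Prod>c\<in>cls t a. D c) * (\<Prod>c\<in>cls t b. D c) = taup r s t (cls t a) * taup r s t (cls t b)"
    show "\<forall>x<n. (\<Prod>c\<in>cls (Sig a b k0 # t) x. D c) = taup r s (Sig a b k0 # t) (cls (Sig a b k0 # t) x)"
      using h U T by (auto simp: cls_Sig)
  qed
qed



lemma root_nz: "0 < r \<Longrightarrow> (x::complex) ^ r = 1 \<Longrightarrow> x \<noteq> 0"
  by (metis one_neq_zero power_0_left less_not_refl2)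

lemma D'_root: "0 < r \<Longrightarrow> \<forall>c<n. D c ^ r = 1 \<Longrightarrow> \<forall>c<n. (D c * inverse (dg_of r s x (prm t c))) ^ r = 1"
  using dg_of_root by (simp add: power_mult_distrib power_inverse)

lemma cls_prod_root: fixes D :: "nat \<Rightarrow> complex" assumes "0 < r" "set t \<subseteq> Refl r s n" "x < n" "\<forall>c<n. D c ^ r = 1"
  shows "(\<Prod>c\<in>cls t x. D c) ^ r = 1"
  by (rule prod_root[OF cls_finite[OF assms(2,3)]]) (use cls_lt[OF assms(2,3)] assms(4) in auto)

lemma N_lemma: assumes r: "0 < r"
  shows "set t \<subseteq> Refl r s n \<Longrightarrow> (\<forall>c<n. D c ^ r = 1) \<Longrightarrow>
    card (SS r s n t D) * r ^ n = (if cond r s n t D then r ^ (nsig t + card (classes n t)) else 0)"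
proof (induction t arbitrary: D)
  case Nil
  have "SS r s n [] D = (if \<forall>c<n. D c = 1 then {[]} else {})" by (auto simp: SS_def)
  moreover have "cond r s n [] D \<longleftrightarrow> (\<forall>c<n. D c = 1)"
    by (auto simp: cond_def cls_def Rl_Nil)
  ultimately show ?case by (cases "\<forall>c<n. D c = 1") (simp_all add: classes_Nil)
next
  case (Cons x t)
  have v: "set t \<subseteq> Refl r s n" using Cons.prems by simp
  show ?case
  proof (cases x)
    case (Tau a k)
    let ?D' = "\<lambda>c. D c * inverse (dg_of r s (Tau a k) (prm t c))"
    have "card (SS r s n (x # t) D) * r ^ n = card (SS r s n t ?D') * r ^ n"
      by (simp add: Tau SS_Tau[OF r])
    also have "\<dots> = (if cond r s n t ?D' then r ^ (nsig t + card (classes n t)) else 0)"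
      by (rule Cons.IH[OF v D'_root[OF r Cons.prems(2)]])
    finally show ?thesis using cond_Tau[of a k t r s n D] Cons.prems by (simp add: Tau)
  next
    case (Sig a b k0)
    let ?Dk = "\<lambda>k c. D c * inverse (dg_of r s (Sig a b k) (prm t c))"
    let ?E = "r ^ (nsig t + card (classes n t))"
    have vv: "set (Sig a b k0 # t) \<subseteq> Refl r s n" using Cons.prems Sig by simp
    have a: "a < n" and b: "b < n" using vv by (auto simp: Refl_def)
    have "card (SS r s n (x # t) D) * r ^ n = (\<Sum>k<r. card (SS r s n t (?Dk k)) * r ^ n)"
      by (simp add: Sig card_SS_Sig[OF r] sum_distrib_right)
    also have "\<dots> = (\<Sum>k<r. if cond r s n t (?Dk k) then ?E else 0)"
      by (intro sum.cong refl) (rule Cons.IH[OF v D'_root[OF r Cons.prems(2)]])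
    also have "\<dots> = card {k \<in> {..<r}. cond r s n t (?Dk k)} * ?E"
      by (simp add: sum.inter_filter[symmetric])
    finally have main: "card (SS r s n (x # t) D) * r ^ n = card {k \<in> {..<r}. cond r s n t (?Dk k)} * ?E" .
    show ?thesis
    proof (cases "(a, b) \<in> Rl t")
      case True
      have "{k \<in> {..<r}. cond r s n t (?Dk k)} = (if cond r s n (Sig a b k0 # t) D then {..<r} else {})"
        using cond_Sig_same[OF vv True] by auto
      moreover have "classes n (Sig a b k0 # t) = classes n t"
        by (simp add: classes_def cls_Sig_same_all[OF True])
      ultimately show ?thesis using main by (simp add: Sig power_add)
    next
      case False
      let ?X = "\<Prod>c\<in>cls t a. D c" and ?Y = "\<Prod>c\<in>cls t b. D c"
      let ?TA = "taup r s t (cls t a)" and ?TB = "taup r s t (cls t b)"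
      let ?Q = "\<forall>x<n. x \<notin> cls t a \<union> cls t b \<longrightarrow> (\<Prod>c\<in>cls t x. D c) = taup r s t (cls t x)"
      have X: "?X ^ r = 1" using cls_prod_root[OF r v a Cons.prems(2)] .
      have Y: "?Y ^ r = 1" using cls_prod_root[OF r v b Cons.prems(2)] .
      have TA: "?TA ^ r = 1" using taup_root[OF r] by blast
      have "{k \<in> {..<r}. cond r s n t (?Dk k)} = {k \<in> {..<r}. ?Q \<and> ?X * zeta r ^ k = ?TA \<and> ?Y * inverse (zeta r ^ k) = ?TB}"
        using cond_Sig_diff_k[OF vv False] by blast
      hence "card {k \<in> {..<r}. cond r s n t (?Dk k)} = (if ?Q \<and> ?X * ?Y = ?TA * ?TB then 1 else 0)"
        using count_k[OF r root_nz[OF r X] root_nz[OF r Y] root_nz[OF r TA] X TA] by simp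
      also have "\<dots> = (if cond r s n (Sig a b k0 # t) D then 1 else 0)"
        using cond_Sig_diff[OF vv False] by simp
      finally have c: "card {k \<in> {..<r}. cond r s n t (?Dk k)} = (if cond r s n (Sig a b k0 # t) D then 1 else 0)" .
      have cl: "card (classes n (Sig a b k0 # t)) + 1 = card (classes n t)"
        by (rule classes_Sig_diff[OF v a b False])
      have e: "nsig t + card (classes n t) = Suc (nsig t + card (classes n (Sig a b k0 # t)))"
        using cl by simp
      show ?thesis using main c unfolding e by (simp add: Sig)
    qed
  qed
qed



fun stp :: "refl \<Rightarrow> refl" where
  "stp (Sig i j k) = Sig i j 0"
| "stp (Tau i k) = Tau i k"

fun sigks :: "refl list \<Rightarrow> nat list" where
  "sigks [] = []"
| "sigks (Sig i j k # xs) = k # sigks xs"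
| "sigks (Tau i k # xs) = sigks xs"

lemma fill_strip: "fill (map stp xs) (sigks xs) = xs"
proof (induction xs)
  case (Cons x xs) thus ?case by (cases x) auto
qed simp

lemma length_sigks: "length (sigks xs) = nsig xs"
proof (induction xs)
  case (Cons x xs) thus ?case by (cases x) auto
qed simp

lemma nsig_strip: "nsig (map stp xs) = nsig xs"
proof (induction xs)
  case (Cons x xs) thus ?case by (cases x) auto
qed simp

lemma strip_fill: "map stp (fill t ks) = map stp t"
  by (induction t ks rule: fill.induct) auto

lemma sigks_fill: "length ks = nsig t \<Longrightarrow> sigks (fill t ks) = ks"
proof (induction t ks rule: fill.induct)
  case (2 i j k t ks) thus ?case by (cases ks) auto
qed auto

lemma edges_fill: "fact_edges (fill t ks) = fact_edges t"
  by (induction t ks rule: fill.induct) auto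

lemma edges_strip: "fact_edges (map stp xs) = fact_edges xs"
proof (induction xs)
  case (Cons x xs) thus ?case by (cases x) auto
qed simp

lemma length_fill: "length (fill t ks) = length t"
  by (induction t ks rule: fill.induct) auto

lemma filter_fill: "length (filter is_Sig (fill t ks)) = length (filter is_Sig t)"
   "length (filter (\<lambda>x. \<not> is_Sig x) (fill t ks)) = length (filter (\<lambda>x. \<not> is_Sig x) t)"
  by (induction t ks rule: fill.induct) auto

lemma filter_strip: "length (filter is_Sig (map stp t)) = length (filter is_Sig t)"
   "length (filter (\<lambda>x. \<not> is_Sig x) (map stp t)) = length (filter (\<lambda>x. \<not> is_Sig x) t)"
proof (induction t)
  case (Cons x xs) { case 1 thus ?case using Cons by (cases x) auto next
  case 2 thus ?case using Cons by (cases x) auto }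
qed simp_all

lemma strip_valid: "0 < r \<Longrightarrow> set xs \<subseteq> Refl r s n \<Longrightarrow> set (map stp xs) \<subseteq> Refl r s n"
proof (induction xs)
  case (Cons x xs) thus ?case by (cases x) (auto simp: Refl_def)
qed simp

lemma sigks_valid: "set xs \<subseteq> Refl r s n \<Longrightarrow> set (sigks xs) \<subseteq> {..<r}"
proof (induction xs)
  case (Cons x xs) thus ?case by (cases x) (auto simp: Refl_def)
qed simp

lemma Refl_finite: "finite (Refl r s n)"
proof -
  have "Refl r s n \<subseteq> (\<lambda>(i, j, k). Sig i j k) ` ({..<n} \<times> {..<n} \<times> {..<r}) \<union>
      (\<lambda>(i, k). Tau i k) ` ({..<n} \<times> {..<r div s})"
  proof
    fix x assume "x \<in> Refl r s n"
    thus "x \<in> (\<lambda>(i, j, k). Sig i j k) ` ({..<n} \<times> {..<n} \<times> {..<r}) \<union>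
      (\<lambda>(i, k). Tau i k) ` ({..<n} \<times> {..<r div s})"
      by (cases x) (auto simp: Refl_def image_iff)
  qed
  thus ?thesis by (rule finite_subset) auto
qed

lemma connected_cls: assumes v: "set t \<subseteq> Refl r s n" and c: "connected_fact n t" and x: "x < n"
  shows "cls t x = {..<n}"
  using cls_lt[OF v x] c x unfolding connected_fact_def cls_def Rl_def by auto

lemma connected_classes: assumes v: "set t \<subseteq> Refl r s n" and c: "connected_fact n t" and n: "0 < n"
  shows "classes n t = {{..<n}}"
  using connected_cls[OF v c] n unfolding classes_def by auto



definition Tset :: "nat \<Rightarrow> nat \<Rightarrow> nat \<Rightarrow> nat \<Rightarrow> nat \<Rightarrow> refl list set" where
  "Tset r s n m1 m2 = {t. map stp t = t \<and> length t = m1 + m2 \<and> set t \<subseteq> Refl r s n \<and> connected_fact n t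
     \<and> length (filter is_Sig t) = m1 \<and> length (filter (\<lambda>x. \<not> is_Sig x) t) = m2}"

lemma stp_simps [simp]: "stp (stp x) = stp x" "is_Sig (stp x) = is_Sig x"
  by (cases x; simp)+

lemma stp_idem: "map stp (map stp xs) = map stp xs"
proof (induction xs)
  case (Cons x xs) thus ?case by (cases x) auto
qed simp

lemma connected_edges: "fact_edges t = fact_edges t' \<Longrightarrow> connected_fact n t = connected_fact n t'"
  by (simp add: connected_fact_def)

lemma count_F:
  assumes r: "0 < r" and n: "0 < n" and wM: "w = M n pw dw" and pw: "\<forall>a<n. pw a < n"
    and dw: "\<forall>a<n. dw a \<noteq> 0 \<and> dw a ^ r = 1"
  shows "conn_num2 r s n m1 m2 w * r ^ n =
    card {t \<in> Tset r s n m1 m2. (\<forall>c<n. prm t c = pw c) \<and> (\<Prod>c<n. dw c) = taup r s t {..<n}} * r ^ (m1 + 1)"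
proof -
  let ?T = "Tset r s n m1 m2"
  define K where "K t = {ks. length ks = nsig t \<and> set ks \<subseteq> {..<r} \<and> fact_prod r s n (fill t ks) = w}" for t
  define Fs where "Fs = {xs \<in> factorizations r s n (m1 + m2) w. connected_fact n xs
      \<and> length (filter is_Sig xs) = m1 \<and> length (filter (\<lambda>x. \<not> is_Sig x) xs) = m2}"
  have bij: "bij_betw (\<lambda>xs. (map stp xs, sigks xs)) Fs (Sigma ?T K)"
  proof (rule bij_betw_byWitness[where f' = "\<lambda>(t, ks). fill t ks"])
    show "\<forall>a\<in>Fs. (\<lambda>(t, ks). fill t ks) (map stp a, sigks a) = a" by (simp add: fill_strip)
    show "\<forall>a'\<in>Sigma ?T K. (map stp ((\<lambda>(t, ks). fill t ks) a'), sigks ((\<lambda>(t, ks). fill t ks) a')) = a'"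
      by (auto simp: Tset_def K_def strip_fill sigks_fill)
    show "(\<lambda>xs. (map stp xs, sigks xs)) ` Fs \<subseteq> Sigma ?T K"
    proof (clarsimp)
      fix xs assume xs: "xs \<in> Fs"
      hence v: "set xs \<subseteq> Refl r s n" by (simp add: Fs_def factorizations_def)
      show "map stp xs \<in> ?T \<and> sigks xs \<in> K (map stp xs)"
        using xs strip_valid[OF r v] sigks_valid[OF v]
        by (auto simp: Fs_def factorizations_def Tset_def K_def stp_idem filter_strip o_def
            connected_edges[OF edges_strip] length_sigks nsig_strip fill_strip)
    qed
    show "(\<lambda>(t, ks). fill t ks) ` Sigma ?T K \<subseteq> Fs"
    proof (clarsimp)
      fix t ks assume t: "t \<in> ?T" and ks: "ks \<in> K t"
      have v: "set t \<subseteq> Refl r s n" using t by (simp add: Tset_def)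
      have "length ks = nsig t" "set ks \<subseteq> {..<r}" using ks by (auto simp: K_def)
      note fv = fill_valid[OF v this]
      show "fill t ks \<in> Fs"
        using t ks fv by (auto simp: Fs_def factorizations_def Tset_def K_def length_fill filter_fill
            connected_edges[OF edges_fill])
    qed
  qed
  have finT: "finite ?T"
  proof (rule finite_subset)
    show "?T \<subseteq> {xs. set xs \<subseteq> Refl r s n \<and> length xs = m1 + m2}" by (auto simp: Tset_def)
  qed (rule finite_lists_length_eq[OF Refl_finite])
  have finK: "finite (K t)" for t
  proof (rule finite_subset)
    show "K t \<subseteq> {xs. set xs \<subseteq> {..<r} \<and> length xs = nsig t}" by (auto simp: K_def)
  qed (rule finite_lists_length_eq, simp)
  have "conn_num2 r s n m1 m2 w = card Fs" by (simp add: conn_num2_def Fs_def)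
  also have "\<dots> = card (Sigma ?T K)" by (rule bij_betw_same_card[OF bij])
  also have "\<dots> = (\<Sum>t\<in>?T. card (K t))" using finT finK by (simp add: card_SigmaI)
  finally have c1: "conn_num2 r s n m1 m2 w * r ^ n = (\<Sum>t\<in>?T. card (K t) * r ^ n)"
    by (simp add: sum_distrib_right)
  have c2: "card (K t) * r ^ n = (if (\<forall>c<n. prm t c = pw c) \<and> (\<Prod>c<n. dw c) = taup r s t {..<n}
      then r ^ (m1 + 1) else 0)" if t: "t \<in> ?T" for t
  proof -
    have v: "set t \<subseteq> Refl r s n" and con: "connected_fact n t" and ns: "nsig t = m1"
      using t by (auto simp: Tset_def nsig_def)
    have K: "K t = (if \<forall>c<n. prm t c = pw c then SS r s n t dw else {})"
    proof -
      have "fact_prod r s n (fill t ks) = w \<longleftrightarrow> (\<forall>c<n. prm t c = pw c) \<and> (\<forall>c<n. dgl r s (fill t ks) c = dw c)"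
        if "length ks = nsig t" "set ks \<subseteq> {..<r}" for ks
      proof -
        have fv: "set (fill t ks) \<subseteq> Refl r s n" by (rule fill_valid[OF v that])
        show ?thesis unfolding fact_prod_M[OF fv] wM prm_fill
          using M_eq[of n "prm t" pw "dgl r s (fill t ks)" dw] prm_lt[OF v] pw dgl_root[OF r] dw
          by auto
      qed
      thus ?thesis by (auto simp: K_def SS_def)
    qed
    have cond: "cond r s n t dw \<longleftrightarrow> (\<Prod>c<n. dw c) = taup r s t {..<n}"
      using n by (simp add: cond_def connected_cls[OF v con]) blast
    have N: "card (SS r s n t dw) * r ^ n = (if cond r s n t dw then r ^ (nsig t + card (classes n t)) else 0)"
      using N_lemma[OF r v] dw by auto
    show ?thesis using N unfolding K cond connected_classes[OF v con n] ns by auto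
  qed
  have "(\<Sum>t\<in>?T. card (K t) * r ^ n) = (\<Sum>t\<in>?T. if (\<forall>c<n. prm t c = pw c) \<and> (\<Prod>c<n. dw c) = taup r s t {..<n}
      then r ^ (m1 + 1) else 0)" using c2 by (rule sum.cong[OF refl])
  also have "\<dots> = card {t \<in> ?T. (\<forall>c<n. prm t c = pw c) \<and> (\<Prod>c<n. dw c) = taup r s t {..<n}} * r ^ (m1 + 1)"
    using finT by (simp add: sum.inter_filter[symmetric])
  finally show ?thesis using c1 by simp
qed



lemma card_UN_Cons:
  assumes "finite H" "\<And>x. x \<in> H \<Longrightarrow> finite (F x)"
  shows "card (\<Union>x\<in>H. Cons x ` F x) = (\<Sum>x\<in>H. card (F x))"
proof -
  have "card (\<Union>x\<in>H. Cons x ` F x) = (\<Sum>x\<in>H. card (Cons x ` F x))"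
    using assms by (intro card_UN_disjoint) auto
  also have "\<dots> = (\<Sum>x\<in>H. card (F x))" by (intro sum.cong refl card_image) auto
  finally show ?thesis .
qed

lemma split_nonempty:
  assumes "\<forall>u\<in>P. u \<noteq> []"
  shows "P = (\<Union>x\<in>{x. \<exists>u. x # u \<in> P}. Cons x ` {u. x # u \<in> P})"
proof
  show "P \<subseteq> (\<Union>x\<in>{x. \<exists>u. x # u \<in> P}. Cons x ` {u. x # u \<in> P})"
  proof
    fix p assume p: "p \<in> P"
    then obtain x u where "p = x # u" using assms by (cases p) auto
    thus "p \<in> (\<Union>x\<in>{x. \<exists>u. x # u \<in> P}. Cons x ` {u. x # u \<in> P})" using p by auto
  qed
qed auto

lemma heads_finite: "finite P \<Longrightarrow> finite {x. \<exists>u. x # u \<in> P}"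
proof -
  assume "finite P"
  moreover have "{x. \<exists>u. x # u \<in> P} \<subseteq> hd ` P" by (auto simp: image_iff) (metis list.sel(1))
  ultimately show ?thesis using finite_subset by blast
qed

lemma tails_finite: "finite P \<Longrightarrow> finite {u. x # u \<in> P}"
proof -
  assume "finite P"
  moreover have "{u. x # u \<in> P} = Cons x -` P" by auto
  ultimately show ?thesis by (simp add: finite_vimageI)
qed

lemma card_tails: assumes "finite P" "\<forall>u\<in>P. u \<noteq> []"
  shows "(\<Sum>x\<in>{x. \<exists>u. x # u \<in> P}. card {u. x # u \<in> P}) = card P"
proof -
  have e: "card (\<Union>x\<in>{x. \<exists>u. x # u \<in> P}. Cons x ` {u. x # u \<in> P}) = (\<Sum>x\<in>{x. \<exists>u. x # u \<in> P}. card {u. x # u \<in> P})"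
    by (rule card_UN_Cons[OF heads_finite[OF assms(1)]]) (rule tails_finite[OF assms(1)])
  from split_nonempty[OF assms(2)] have "card P = card (\<Union>x\<in>{x. \<exists>u. x # u \<in> P}. Cons x ` {u. x # u \<in> P})"
    by (rule arg_cong)
  thus ?thesis using e by simp
qed

definition shuf :: "'a set \<Rightarrow> 'a set \<Rightarrow> 'a list set \<Rightarrow> 'a list set \<Rightarrow> 'a list set" where
  "shuf A B P Q = {t. set t \<subseteq> A \<union> B \<and> filter (\<lambda>x. x \<in> A) t \<in> P \<and> filter (\<lambda>x. x \<in> B) t \<in> Q}"

lemma shuffle_count:
  assumes "A \<inter> B = {}"
  shows "finite P \<Longrightarrow> finite Q \<Longrightarrow> \<forall>u\<in>P. length u = m1 \<and> set u \<subseteq> A \<Longrightarrow> \<forall>v\<in>Q. length v = m2 \<and> set v \<subseteq> B \<Longrightarrow>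
    finite (shuf A B P Q) \<and> card (shuf A B P Q) = ((m1 + m2) choose m1) * card P * card Q"
proof (induction "m1 + m2" arbitrary: m1 m2 P Q)
  case 0
  hence P: "P \<subseteq> {[]}" and Q: "Q \<subseteq> {[]}" by auto
  have "shuf A B P Q = (if [] \<in> P \<and> [] \<in> Q then {[]} else {})"
  proof -
    have "t = []" if "set t \<subseteq> A \<union> B" "filter (\<lambda>x. x \<in> A) t = []" "filter (\<lambda>x. x \<in> B) t = []" for t
      using that by (cases t) (auto simp: filter_empty_conv)
    thus ?thesis using P Q by (auto simp: shuf_def)
  qed
  moreover have "card P = (if [] \<in> P then 1 else 0)" using P
    by (cases "[] \<in> P") (auto simp: subset_singleton_iff)
  moreover have "card Q = (if [] \<in> Q then 1 else 0)" using Q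
    by (cases "[] \<in> Q") (auto simp: subset_singleton_iff)
  ultimately show ?case using 0 by auto
next
  case (Suc N)
  let ?HA = "{x. \<exists>u. x # u \<in> P}" and ?HB = "{x. \<exists>u. x # u \<in> Q}"
  let ?PA = "\<lambda>x. {u. x # u \<in> P}" and ?QB = "\<lambda>x. {u. x # u \<in> Q}"
  have HAA: "?HA \<subseteq> A" using Suc.prems(3) by auto
  have HBB: "?HB \<subseteq> B" using Suc.prems(4) by auto
  have eq: "shuf A B P Q = (\<Union>x\<in>?HA. Cons x ` shuf A B (?PA x) Q) \<union> (\<Union>x\<in>?HB. Cons x ` shuf A B P (?QB x))"
  proof
    show "shuf A B P Q \<subseteq> (\<Union>x\<in>?HA. Cons x ` shuf A B (?PA x) Q) \<union> (\<Union>x\<in>?HB. Cons x ` shuf A B P (?QB x))"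
    proof
      fix t assume t: "t \<in> shuf A B P Q"
      show "t \<in> (\<Union>x\<in>?HA. Cons x ` shuf A B (?PA x) Q) \<union> (\<Union>x\<in>?HB. Cons x ` shuf A B P (?QB x))"
      proof (cases t)
        case Nil
        hence "[] \<in> P" "[] \<in> Q" using t by (auto simp: shuf_def)
        hence "m1 = 0" "m2 = 0" using Suc.prems(3,4) by auto
        thus ?thesis using Suc.hyps by simp
      next
        case (Cons x t')
        show ?thesis
        proof (cases "x \<in> A")
          case True
          hence "x \<notin> B" using assms by auto
          thus ?thesis using t True Cons by (auto simp: shuf_def)
        next
          case False
          hence "x \<in> B" using t Cons by (auto simp: shuf_def)
          thus ?thesis using t False Cons by (auto simp: shuf_def)
        qed
      qed
    qed
    show "(\<Union>x\<in>?HA. Cons x ` shuf A B (?PA x) Q) \<union> (\<Union>x\<in>?HB. Cons x ` shuf A B P (?QB x)) \<subseteq> shuf A B P Q"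
    proof
      fix t assume "t \<in> (\<Union>x\<in>?HA. Cons x ` shuf A B (?PA x) Q) \<union> (\<Union>x\<in>?HB. Cons x ` shuf A B P (?QB x))"
      thus "t \<in> shuf A B P Q"
      proof
        assume "t \<in> (\<Union>x\<in>?HA. Cons x ` shuf A B (?PA x) Q)"
        then obtain x t' where "x \<in> ?HA" "t = x # t'" "t' \<in> shuf A B (?PA x) Q" by auto
        moreover have "x \<in> A" "x \<notin> B" using calculation(1) HAA assms by auto
        ultimately show ?thesis by (auto simp: shuf_def)
      next
        assume "t \<in> (\<Union>x\<in>?HB. Cons x ` shuf A B P (?QB x))"
        then obtain x t' where "x \<in> ?HB" "t = x # t'" "t' \<in> shuf A B P (?QB x)" by auto
        moreover have "x \<in> B" "x \<notin> A" using calculation(1) HBB assms by auto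
        ultimately show ?thesis by (auto simp: shuf_def)
      qed
    qed
  qed
  have partA: "finite (\<Union>x\<in>?HA. Cons x ` shuf A B (?PA x) Q) \<and>
      card (\<Union>x\<in>?HA. Cons x ` shuf A B (?PA x) Q) = (if m1 = 0 then 0 else (N choose (m1 - 1)) * card P * card Q)"
  proof (cases "m1 = 0")
    case True
    hence "?HA = {}" using Suc.prems(3) by auto
    thus ?thesis using True by simp
  next
    case False
    have IH: "finite (shuf A B (?PA x) Q) \<and> card (shuf A B (?PA x) Q) = (N choose (m1 - 1)) * card (?PA x) * card Q" for x
      using Suc.hyps(1)[of "m1 - 1" m2 "?PA x" Q] Suc.hyps(2) False tails_finite[OF Suc.prems(1)] Suc.prems
      by (simp add: Suc_diff_Suc) fastforce
    have ne: "\<forall>u\<in>P. u \<noteq> []" using Suc.prems(3) False by auto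
    have "card (\<Union>x\<in>?HA. Cons x ` shuf A B (?PA x) Q) = (\<Sum>x\<in>?HA. card (shuf A B (?PA x) Q))"
      using IH by (intro card_UN_Cons heads_finite Suc.prems(1)) auto
    also have "\<dots> = (\<Sum>x\<in>?HA. card (?PA x) * ((N choose (m1 - 1)) * card Q))"
      by (rule sum.cong[OF refl]) (simp add: IH mult_ac)
    also have "\<dots> = (\<Sum>x\<in>?HA. card (?PA x)) * ((N choose (m1 - 1)) * card Q)"
      by (rule sum_distrib_right[symmetric])
    also have "\<dots> = (N choose (m1 - 1)) * card P * card Q"
      using card_tails[OF Suc.prems(1) ne] by simp
    finally show ?thesis using False IH heads_finite[OF Suc.prems(1)] by auto
  qed
  have partB: "finite (\<Union>x\<in>?HB. Cons x ` shuf A B P (?QB x)) \<and>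
      card (\<Union>x\<in>?HB. Cons x ` shuf A B P (?QB x)) = (if m2 = 0 then 0 else (N choose m1) * card P * card Q)"
  proof (cases "m2 = 0")
    case True
    hence "?HB = {}" using Suc.prems(4) by auto
    thus ?thesis using True by simp
  next
    case False
    have IH: "finite (shuf A B P (?QB x)) \<and> card (shuf A B P (?QB x)) = (N choose m1) * card P * card (?QB x)" for x
      using Suc.hyps(1)[of m1 "m2 - 1" P "?QB x"] Suc.hyps(2) False tails_finite[OF Suc.prems(2)] Suc.prems
      by simp fastforce
    have ne: "\<forall>u\<in>Q. u \<noteq> []" using Suc.prems(4) False by auto
    have "card (\<Union>x\<in>?HB. Cons x ` shuf A B P (?QB x)) = (\<Sum>x\<in>?HB. card (shuf A B P (?QB x)))"
      using IH by (intro card_UN_Cons heads_finite Suc.prems(2)) auto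
    also have "\<dots> = (\<Sum>x\<in>?HB. card (?QB x) * ((N choose m1) * card P))"
      by (rule sum.cong[OF refl]) (simp add: IH mult_ac)
    also have "\<dots> = (\<Sum>x\<in>?HB. card (?QB x)) * ((N choose m1) * card P)"
      by (rule sum_distrib_right[symmetric])
    also have "\<dots> = (N choose m1) * card P * card Q"
      using card_tails[OF Suc.prems(2) ne] by simp
    finally show ?thesis using False IH heads_finite[OF Suc.prems(2)] by auto
  qed
  have disj: "(\<Union>x\<in>?HA. Cons x ` shuf A B (?PA x) Q) \<inter> (\<Union>x\<in>?HB. Cons x ` shuf A B P (?QB x)) = {}"
    using HAA HBB assms by auto
  have binom: "((m1 + m2) choose m1) = (if m1 = 0 then 0 else (N choose (m1 - 1))) + (if m2 = 0 then 0 else (N choose m1))"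
  proof -
    have N: "m1 + m2 = Suc N" using Suc.hyps(2) by simp
    show ?thesis
    proof (cases "m1 = 0")
      case True thus ?thesis using N by auto
    next
      case F1: False
      show ?thesis
      proof (cases "m2 = 0")
        case True thus ?thesis using N F1 by (simp add: binomial_eq_0)
      next
        case False
        obtain m where m: "m1 = Suc m" using F1 by (cases m1) auto
        thus ?thesis using N False by (simp add: binomial_Suc_Suc)
      qed
    qed
  qed
  show ?case unfolding eq using partA partB disj binom
    by (simp add: card_Un_disjoint add_mult_distrib)
qed



definition BT :: "nat \<Rightarrow> nat \<Rightarrow> nat \<Rightarrow> refl set" where
  "BT r s n = {x. \<exists>i k. x = Tau i k \<and> i < n \<and> 0 < k \<and> k < r div s}"

lemma prm_filter: "prm t = prm (filter is_Sig t)"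
proof (induction t)
  case (Cons x t) thus ?case by (cases x) auto
qed simp

lemma edges_filter: "fact_edges t = fact_edges (filter is_Sig t)"
proof (induction t)
  case (Cons x t) thus ?case by (cases x) auto
qed simp

lemma taup_filter: "taup r s t C = taup r s (filter (\<lambda>x. \<not> is_Sig x) t) C"
proof (induction t)
  case (Cons x t) thus ?case by (cases x) auto
qed simp

lemma Refl11: "Refl 1 1 n = {x. \<exists>i j. x = Sig i j 0 \<and> i < j \<and> j < n}"
proof -
  have "valid_refl 1 1 n x \<longleftrightarrow> (\<exists>i j. x = Sig i j 0 \<and> i < j \<and> j < n)" for x by (cases x) auto
  thus ?thesis by (auto simp: Refl_def)
qed

lemma Refl11': "Refl (Suc 0) (Suc 0) n = {x. \<exists>i j. x = Sig i j 0 \<and> i < j \<and> j < n}"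
  using Refl11[of n] by simp

lemma AB_disj: "Refl 1 1 n \<inter> BT r s n = {}"
  by (auto simp: Refl11 Refl11' BT_def)

lemma in_AB: assumes "0 < r"
  shows "(set t \<subseteq> Refl 1 1 n \<union> BT r s n) \<longleftrightarrow> (map stp t = t \<and> set t \<subseteq> Refl r s n)"
proof (induction t)
  case (Cons x t)
  have "(x \<in> Refl 1 1 n \<union> BT r s n) \<longleftrightarrow> (stp x = x \<and> x \<in> Refl r s n)"
    using assms by (cases x) (auto simp: Refl11 Refl11' BT_def Refl_def)
  thus ?case using Cons by auto
qed simp

lemma filter_A: "set t \<subseteq> Refl 1 1 n \<union> BT r s n \<Longrightarrow> filter (\<lambda>x. x \<in> Refl 1 1 n) t = filter is_Sig t"
proof (induction t)
  case (Cons x t) thus ?case by (cases x) (auto simp: Refl11 Refl11' BT_def)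
qed simp

lemma filter_B: "set t \<subseteq> Refl 1 1 n \<union> BT r s n \<Longrightarrow> filter (\<lambda>x. x \<in> BT r s n) t = filter (\<lambda>x. \<not> is_Sig x) t"
proof (induction t)
  case (Cons x t) thus ?case by (cases x) (auto simp: Refl11 Refl11' BT_def)
qed simp

definition PP :: "nat \<Rightarrow> nat \<Rightarrow> (nat \<Rightarrow> nat) \<Rightarrow> refl list set" where
  "PP n m1 pw = {u. length u = m1 \<and> set u \<subseteq> Refl 1 1 n \<and> connected_fact n u \<and> (\<forall>c<n. prm u c = pw c)}"

definition QQ :: "nat \<Rightarrow> nat \<Rightarrow> nat \<Rightarrow> nat \<Rightarrow> complex \<Rightarrow> refl list set" where
  "QQ r s n m2 ph = {v. length v = m2 \<and> set v \<subseteq> BT r s n \<and> taup r s v {..<n} = ph}"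

lemma Tprime_shuf: assumes r: "0 < r"
  shows "{t \<in> Tset r s n m1 m2. (\<forall>c<n. prm t c = pw c) \<and> ph = taup r s t {..<n}} =
    shuf (Refl 1 1 n) (BT r s n) (PP n m1 pw) (QQ r s n m2 ph)"
proof (intro set_eqI iffI)
  fix t assume t: "t \<in> {t \<in> Tset r s n m1 m2. (\<forall>c<n. prm t c = pw c) \<and> ph = taup r s t {..<n}}"
  hence AB: "set t \<subseteq> Refl 1 1 n \<union> BT r s n" using in_AB[OF r] by (auto simp: Tset_def)
  have ff: "set (filter is_Sig t) \<subseteq> Refl 1 1 n" "set (filter (\<lambda>x. \<not> is_Sig x) t) \<subseteq> BT r s n"
  proof -
    have "set (filter (\<lambda>x. x \<in> Refl 1 1 n) t) \<subseteq> Refl 1 1 n" "set (filter (\<lambda>x. x \<in> BT r s n) t) \<subseteq> BT r s n"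
      by auto
    thus "set (filter is_Sig t) \<subseteq> Refl 1 1 n" "set (filter (\<lambda>x. \<not> is_Sig x) t) \<subseteq> BT r s n"
      unfolding filter_A[OF AB] filter_B[OF AB] by auto
  qed
  show "t \<in> shuf (Refl 1 1 n) (BT r s n) (PP n m1 pw) (QQ r s n m2 ph)"
    unfolding shuf_def PP_def QQ_def mem_Collect_eq filter_A[OF AB] filter_B[OF AB]
    using t AB ff prm_filter[of t] taup_filter[of r s t] connected_edges[OF edges_filter[of t]]
    by (auto simp: Tset_def)
next
  fix t assume t: "t \<in> shuf (Refl 1 1 n) (BT r s n) (PP n m1 pw) (QQ r s n m2 ph)"
  hence AB: "set t \<subseteq> Refl 1 1 n \<union> BT r s n" by (simp add: shuf_def)
  have len: "length t = length (filter is_Sig t) + length (filter (\<lambda>x. \<not> is_Sig x) t)"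
    by (simp add: sum_length_filter_compl)
  show "t \<in> {t \<in> Tset r s n m1 m2. (\<forall>c<n. prm t c = pw c) \<and> ph = taup r s t {..<n}}"
    using t AB in_AB[OF r] len prm_filter[of t] taup_filter[of r s t] connected_edges[OF edges_filter[of t]]
    unfolding shuf_def PP_def QQ_def mem_Collect_eq filter_A[OF AB] filter_B[OF AB]
    by (auto simp: Tset_def)
qed

lemma dgl11: "set u \<subseteq> Refl 1 1 n \<Longrightarrow> dgl 1 1 u c = 1"
proof (induction u arbitrary: c)
  case (Cons x u) thus ?case by (auto simp: Refl11 Refl11')
qed simp

lemma card_PP: assumes n: "0 < n" and pw: "\<forall>a<n. pw a < n"
  shows "card (PP n m1 pw) = conn_num 1 1 n m1 (M n pw (\<lambda>_. 1))"
proof -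
  have "xs \<in> factorizations 1 1 n m1 (M n pw (\<lambda>_. 1)) \<and> connected_fact n xs \<longleftrightarrow> xs \<in> PP n m1 pw" for xs
  proof (cases "set xs \<subseteq> Refl 1 1 n")
    case True
    have "fact_prod 1 1 n xs = M n pw (\<lambda>_. 1) \<longleftrightarrow> (\<forall>c<n. prm xs c = pw c)"
      unfolding fact_prod_M[OF True] using M_eq[of n "prm xs" pw "dgl 1 1 xs" "\<lambda>_. 1"] prm_lt[OF True] pw
        dgl11[OF True] by auto
    thus ?thesis using True by (auto simp: factorizations_def PP_def)
  next
    case False thus ?thesis by (auto simp: factorizations_def PP_def)
  qed
  thus ?thesis unfolding conn_num_def by (metis (no_types, lifting) Collect_cong mem_Collect_eq PP_def)
qed



definition W :: "'a set \<Rightarrow> ('a \<Rightarrow> complex) \<Rightarrow> nat \<Rightarrow> complex \<Rightarrow> nat" where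
  "W S g m ph = card {zs. length zs = m \<and> set zs \<subseteq> S \<and> prod_list (map g zs) = ph}"

lemma W_0: "W S g 0 ph = (if ph = 1 then 1 else 0)"
proof -
  have "{zs. length zs = 0 \<and> set zs \<subseteq> S \<and> prod_list (map g zs) = ph} = (if ph = 1 then {[]} else {})" by auto
  thus ?thesis by (simp add: W_def)
qed

lemma W_Suc: assumes S: "finite S" and nz: "\<forall>x\<in>S. g x \<noteq> 0"
  shows "W S g (Suc m) ph = (\<Sum>x\<in>S. W S g m (ph / g x))"
proof -
  let ?L = "\<lambda>m ph. {zs. length zs = m \<and> set zs \<subseteq> S \<and> prod_list (map g zs) = ph}"
  have eq: "?L (Suc m) ph = (\<Union>x\<in>S. Cons x ` ?L m (ph / g x))"
  proof (intro set_eqI iffI)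
    fix zs assume "zs \<in> ?L (Suc m) ph"
    then obtain x zs' where zs: "zs = x # zs'" "length zs' = m" "x \<in> S" "set zs' \<subseteq> S" "g x * prod_list (map g zs') = ph"
      by (cases zs) auto
    hence "prod_list (map g zs') = ph / g x" using nz by (auto simp: field_simps)
    thus "zs \<in> (\<Union>x\<in>S. Cons x ` ?L m (ph / g x))" using zs by auto
  next
    fix zs assume "zs \<in> (\<Union>x\<in>S. Cons x ` ?L m (ph / g x))"
    then obtain x zs' where zs: "zs = x # zs'" "x \<in> S" "zs' \<in> ?L m (ph / g x)" by auto
    thus "zs \<in> ?L (Suc m) ph" using nz by auto
  qed
  have fin: "finite (?L m ph')" for ph'
    by (rule finite_subset[OF _ finite_lists_length_eq[OF S, of m]]) auto
  show ?thesis unfolding W_def eq by (rule card_UN_Cons[OF S fin])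
qed

lemma W_finite_lists: "finite S \<Longrightarrow> finite {zs. length zs = m \<and> set zs \<subseteq> S \<and> P zs}"
  by (rule finite_subset[OF _ finite_lists_length_eq[of S m]]) auto

lemma bij_nontriv: assumes "0 < q"
  shows "bij_betw (\<lambda>k. zeta q ^ k) ({..<q} - {0}) (mu q - {1})"
proof (rule bij_betw_DiffI[OF zeta_bij[OF assms]])
  show "bij_betw (\<lambda>k. zeta q ^ k) {0} {1}" by (simp add: bij_betw_def)
qed (use assms in \<open>auto simp: mu_def\<close>)

lemma BT_eq: "BT r s n = (\<lambda>(i, k). Tau i k) ` ({..<n} \<times> ({..<r div s} - {0}))"
  by (auto simp: BT_def image_iff)

lemma W_QQ: assumes r: "0 < r" and s: "0 < s" and d: "s dvd r"
  shows "W (BT r s n) (tp r s {..<n}) m ph = n ^ m * W (mu (r div s) - {1}) id m ph"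
proof (induction m arbitrary: ph)
  case 0 thus ?case by (simp add: W_0)
next
  case (Suc m)
  let ?q = "r div s"
  have q: "0 < ?q" using r s d by (auto elim: dvdE)
  let ?Z = "mu ?q - {1}"
  have finB: "finite (BT r s n)" unfolding BT_eq by auto
  have nzB: "\<forall>x\<in>BT r s n. tp r s {..<n} x \<noteq> 0" by (auto simp: BT_def zeta_nz)
  have finZ: "finite ?Z" using mu_finite[OF q] by simp
  have nzZ: "\<forall>x\<in>?Z. id x \<noteq> 0" using q by (auto simp: mu_def power_0_left)
  define f where "f y = W ?Z id m (ph / y)" for y
  have inj: "inj_on (\<lambda>(i, k). Tau i k) ({..<n} \<times> ({..<?q} - {0}))" by (auto simp: inj_on_def)
  have "W (BT r s n) (tp r s {..<n}) (Suc m) ph = (\<Sum>x\<in>BT r s n. W (BT r s n) (tp r s {..<n}) m (ph / tp r s {..<n} x))"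
    by (rule W_Suc[OF finB nzB])
  also have "\<dots> = (\<Sum>x\<in>BT r s n. n ^ m * f (tp r s {..<n} x))" by (simp add: Suc.IH f_def id_def)
  also have "\<dots> = (\<Sum>(i, k)\<in>{..<n} \<times> ({..<?q} - {0}). n ^ m * f (zeta r ^ (s * k)))"
    unfolding BT_eq by (subst sum.reindex[OF inj]) (auto intro!: sum.cong)
  also have "\<dots> = n * (\<Sum>k\<in>{..<?q} - {0}. n ^ m * f (zeta ?q ^ k))"
    by (simp add: sum.cartesian_product[symmetric] zeta_sub[OF s d r])
  also have "(\<Sum>k\<in>{..<?q} - {0}. n ^ m * f (zeta ?q ^ k)) = (\<Sum>z\<in>?Z. n ^ m * f z)"
    by (rule sum.reindex_bij_betw[OF bij_nontriv[OF q]])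
  also have "n * (\<Sum>z\<in>?Z. n ^ m * f z) = n ^ Suc m * (\<Sum>z\<in>?Z. f z)"
    by (simp add: sum_distrib_left mult_ac)
  also have "(\<Sum>z\<in>?Z. f z) = W ?Z id (Suc m) ph"
    unfolding f_def using W_Suc[OF finZ nzZ, of m ph] by (simp add: id_def)
  finally show ?case .
qed



lemma cyc_W: "cyc_num q m k = W (mu q - {1}) id m k"
  by (simp add: cyc_num_def W_def)

lemma prod_list_mu: "set zs \<subseteq> mu q \<Longrightarrow> prod_list zs \<in> mu q"
  by (induction zs) (auto simp: mu_def power_mult_distrib)

lemma cyc_total: assumes q: "0 < q"
  shows "(\<Sum>y\<in>mu q. cyc_num q m y) = (q - 1) ^ m"
proof -
  let ?Z = "mu q - {1}"
  let ?L = "{zs. set zs \<subseteq> ?Z \<and> length zs = m}"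
  have finZ: "finite ?Z" using mu_finite[OF q] by simp
  have cZ: "card ?Z = q - 1" using mu_card[OF q] mu_finite[OF q] by (simp add: mu_def card_Diff_singleton)
  have "?L = (\<Union>y\<in>mu q. {zs. length zs = m \<and> set zs \<subseteq> ?Z \<and> prod_list zs = y})"
    using prod_list_mu[of _ q] by auto
  hence "card ?L = card (\<Union>y\<in>mu q. {zs. length zs = m \<and> set zs \<subseteq> ?Z \<and> prod_list zs = y})" by simp
  also have "\<dots> = (\<Sum>y\<in>mu q. card {zs. length zs = m \<and> set zs \<subseteq> ?Z \<and> prod_list zs = y})"
    by (rule card_UN_disjoint) (auto simp: mu_finite[OF q] intro: W_finite_lists[OF finZ])
  finally show ?thesis using card_lists_length_eq[OF finZ, of m] cZ by (simp add: cyc_num_def)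
qed

lemma cyc_rec: assumes q: "0 < q" and k: "k \<in> mu q"
  shows "cyc_num q (Suc m) k + cyc_num q m k = (q - 1) ^ m"
proof -
  let ?Z = "mu q - {1}"
  have finZ: "finite ?Z" using mu_finite[OF q] by simp
  have nzZ: "\<forall>x\<in>?Z. id x \<noteq> 0" using q by (auto simp: mu_def power_0_left)
  have k0: "k \<noteq> 0" using k q by (auto simp: mu_def power_0_left)
  have "cyc_num q (Suc m) k = (\<Sum>z\<in>?Z. cyc_num q m (k / z))"
    unfolding cyc_W using W_Suc[OF finZ nzZ, of m k] by (simp add: id_def)
  moreover have "(\<Sum>z\<in>mu q. cyc_num q m (k / z)) = cyc_num q m (k / 1) + (\<Sum>z\<in>?Z. cyc_num q m (k / z))"
    using mu_finite[OF q] by (subst sum.remove[of _ 1]) (auto simp: mu_def)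
  moreover have "(\<Sum>z\<in>mu q. cyc_num q m (k / z)) = (\<Sum>y\<in>mu q. cyc_num q m y)"
  proof (rule sum.reindex_bij_betw)
    show "bij_betw (\<lambda>z. k / z) (mu q) (mu q)"
      by (rule bij_betw_byWitness[where f' = "\<lambda>z. k / z"]) (use k k0 in \<open>auto simp: mu_def power_divide\<close>)
  qed
  ultimately show ?thesis using cyc_total[OF q, of m] by simp
qed

lemma cyc_formula: assumes q: "0 < q" and k: "k \<in> mu q"
  shows "real (cyc_num q m k) = 1 / real q * ((real q - 1) ^ m - (-1) ^ m) + (if k = 1 then 1 else 0) * (-1) ^ m"
proof (induction m)
  case 0
  have "cyc_num q 0 k = (if k = 1 then 1 else 0)" unfolding cyc_W by (simp add: W_0)
  thus ?case by simp
next
  case (Suc m)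
  have "real (cyc_num q (Suc m) k) = real ((q - 1) ^ m) - real (cyc_num q m k)"
    using cyc_rec[OF q k, of m] by linarith
  also have "real ((q - 1) ^ m) = (real q - 1) ^ m" using q by (simp add: of_nat_diff)
  finally show ?case using Suc q by (simp add: field_simps)
qed


lemma powi_aux: assumes "0 < r"
  shows "real r powi (int m1 - int n + 1) * real r ^ n = real r ^ (m1 + 1)"
proof -
  have e: "int m1 - int n + 1 + int n = int (m1 + 1)" by simp
  have "real r powi (int m1 - int n + 1 + int n) = real r powi (int m1 - int n + 1) * real r powi (int n)"
    by (rule power_int_add) (use assms in simp)
  hence "real r powi (int (m1 + 1)) = real r powi (int m1 - int n + 1) * real r powi (int n)" unfolding e .
  thus ?thesis by (metis power_int_of_nat)
qed

theorem mainTheorem1: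
  fixes r s n m1 m2 :: nat and w :: cmat
  assumes "0 < r" "0 < s" "0 < n" "s dvd r" "w \<in> Grp r s n"
  shows "real (conn_num2 r s n m1 m2 w)
           = (real r powi (int m1 - int n + 1) * real n ^ m2 * real ((m1 + m2) choose m1)
               * real (cyc_num (r div s) m2 (phi n w))) * real (conn_num 1 1 n m1 (piS w))
       \<and> real (cyc_num (r div s) m2 (phi n w))
           = 1 / real (r div s) * ((real (r div s) - 1) ^ m2 - (-1) ^ m2)
             + real (delta n w) * (-1) ^ m2"
proof -
  have r: "0 < r" and s: "0 < s" and n: "0 < n" and d: "s dvd r" using assms by auto
  obtain pw dw where wM: "w = M n pw dw" and pw: "\<forall>a<n. pw a < n" and dw: "\<forall>a<n. dw a \<noteq> 0 \<and> dw a ^ r = 1"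
    and ph: "phi n w = (\<Prod>a<n. dw a)" and phq: "phi n w ^ (r div s) = 1" and piM: "piS w = M n pw (\<lambda>_. 1)"
    using grp_M[OF assms(5)] by metis
  let ?q = "r div s"
  have q: "0 < ?q" using r s d by (auto elim: dvdE)
  let ?ph = "\<Prod>a<n. dw a"
  let ?P = "PP n m1 pw" and ?Q = "QQ r s n m2 ?ph"
  have finP: "finite ?P"
    by (rule finite_subset[OF _ finite_lists_length_eq[OF Refl_finite, of 1 1 n m1]]) (auto simp: PP_def)
  have finBT: "finite (BT r s n)" unfolding BT_eq by auto
  have finQ: "finite ?Q"
    by (rule finite_subset[OF _ finite_lists_length_eq[OF finBT, of m2]]) (auto simp: QQ_def)
  have sh: "card (shuf (Refl 1 1 n) (BT r s n) ?P ?Q) = ((m1 + m2) choose m1) * card ?P * card ?Q"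
  proof -
    have "\<forall>u\<in>?P. length u = m1 \<and> set u \<subseteq> Refl 1 1 n" by (simp add: PP_def)
    moreover have "\<forall>v\<in>?Q. length v = m2 \<and> set v \<subseteq> BT r s n" by (simp add: QQ_def)
    ultimately show ?thesis using shuffle_count[OF AB_disj finP finQ] by blast
  qed
  have cP: "card ?P = conn_num 1 1 n m1 (piS w)" unfolding piM by (rule card_PP[OF n pw])
  have "card ?Q = W (BT r s n) (tp r s {..<n}) m2 ?ph" by (simp add: QQ_def W_def taup_def)
  also have "\<dots> = n ^ m2 * cyc_num ?q m2 (phi n w)" unfolding W_QQ[OF r s d] cyc_W ph ..
  finally have cQ: "card ?Q = n ^ m2 * cyc_num ?q m2 (phi n w)" .
  have cF: "conn_num2 r s n m1 m2 w * r ^ n = card (shuf (Refl 1 1 n) (BT r s n) ?P ?Q) * r ^ (m1 + 1)"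
    using count_F[OF r n wM pw dw, of s m1 m2] Tprime_shuf[OF r, of s n m1 m2 pw ?ph] by simp
  have eqn: "real (conn_num2 r s n m1 m2 w) * real r ^ n =
     real ((m1 + m2) choose m1) * real (conn_num 1 1 n m1 (piS w)) * real n ^ m2 * real (cyc_num ?q m2 (phi n w)) * real r ^ (m1 + 1)"
    using arg_cong[OF cF, of real] unfolding sh cP cQ by (simp add: mult_ac)
  have rn: "real r ^ n \<noteq> 0" using r by simp
  have part1: "real (conn_num2 r s n m1 m2 w)
           = (real r powi (int m1 - int n + 1) * real n ^ m2 * real ((m1 + m2) choose m1)
               * real (cyc_num (r div s) m2 (phi n w))) * real (conn_num 1 1 n m1 (piS w))"
  proof -
    have "real (conn_num2 r s n m1 m2 w) * real r ^ n =
      (real r powi (int m1 - int n + 1) * real n ^ m2 * real ((m1 + m2) choose m1)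
               * real (cyc_num (r div s) m2 (phi n w))) * real (conn_num 1 1 n m1 (piS w)) * real r ^ n"
    proof -
      have "real (conn_num2 r s n m1 m2 w) * real r ^ n =
        real ((m1 + m2) choose m1) * real (conn_num 1 1 n m1 (piS w)) * real n ^ m2 * real (cyc_num ?q m2 (phi n w))
          * (real r powi (int m1 - int n + 1) * real r ^ n)"
        unfolding eqn powi_aux[OF r] ..
      thus ?thesis by (simp only: mult.assoc mult.commute mult.left_commute)
    qed
    thus ?thesis using rn r by simp
  qed
  have mu: "phi n w \<in> mu ?q" using phq by (simp add: mu_def)
  have part2: "real (cyc_num (r div s) m2 (phi n w))
           = 1 / real (r div s) * ((real (r div s) - 1) ^ m2 - (-1) ^ m2)
             + real (delta n w) * (-1) ^ m2"
    using cyc_formula[OF q mu, of m2] by (simp add: delta_def)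
  show ?thesis using part1 part2 by simp
qed

end
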